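(* (i) The symmetric bilinear form $(\cdot,\cdot)_i$ on $\bar{\mathcal V}_i$ is positive definite. (ii) The symmetric bilinear form $(\cdot,\cdot)_i$ on ${\mathcal V}_i$ is positive semidefinite.
   Context: Let ${\mathcal G}$ be a complex Lie algebra, ${\mathcal H}$ a subalgebra and $(\cdot,\cdot)$ a bilinear form on ${\mathcal G}$ such that: the form is symmetric, nondegenerate and invariant; ${\mathcal H}$ is a nontrivial finite dimensional abelian self-centralizing subalgebra with $\mathrm{ad}(h)$ diagonalizable for all $h\in{\mathcal H}$; for every root $\alpha$ with $(\alpha,\alpha)\neq 0$ and $x\in{\mathcal G}_\alpha$, $\mathrm{ad}(x)$ acts locally nilpotently on ${\mathcal G}$; the root system $R=\{\alpha\in{\mathcal H}^\star\mid {\mathcal G}_\alpha\neq 0\}$ is discrete in ${\mathcal H}^\star$; and $R^\times=\{\alpha\in R\mid(\alpha,\alpha)\neq0\}\neq\emptyset$ (i.e. ${\mathcal G}$ is a generalized reductive Lie algebra). Here the form is transferred to ${\mathcal H}^\star$ via $(\alpha,\beta):=(t_\alpha,t_\beta)$, where $t_\alpha\in{\mathcal H}$ represents $\alpha$ via the form. Let ${\mathcal V}$ be the real span of $R$. Partition $R^\times=\bigcup_i R^\times_i$ into the equivalence classes of the relation: $\alpha\sim\beta$ iff there is a chain $\alpha=\alpha_0,\alpha_1,\dots,\alpha_t=\beta$ in $R^\times$ with $(\alpha_j,\alpha_{j+1})\neq0$; so each $R^\times_i$ is indecomposable and $(R^\times_i,R^\times_j)=0$ for $i\neq j$. Let ${\mathcal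 V}_i$ be the real span of $R^\times_i$. Fix a nonzero scalar $c_i\in\mathbb C$ such that $(\cdot,\cdot)_i:=c_i(\cdot,\cdot)$ is real valued on ${\mathcal V}_i$ and $(\alpha,\alpha)_i>0$ for all $\alpha\in R^\times_i$. Let ${\mathcal V}^0=\{v\in{\mathcal V}\mid (v,{\mathcal V})=0\}$ be the radical of $(\cdot,\cdot)$ on ${\mathcal V}$, $\bar{\mathcal V}={\mathcal V}/{\mathcal V}^0$ with canonical map $v\mapsto\bar v$, equipped with the induced form $(\bar\alpha,\bar\beta):=(\alpha,\beta)$; let $\bar{\mathcal V}_i$ be the image of ${\mathcal V}_i$, with form $(\cdot,\cdot)_i=c_i(\cdot,\cdot)$. It has been shown that $\bar R_i=\{\bar\alpha\mid\alpha\in R^\times_i\}\cup\{0\}$ is finite. *)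

theory Defs
  imports Complex_Main
begin

text \<open>
  Elements of the dual space of H are
  represented as functions 'g to complex which are complex-linear on H and
  vanish outside H (so that equality of functionals is equality of functions).
\<close>

definition lie_algebra ::
  "(complex \<Rightarrow> 'g::ab_group_add \<Rightarrow> 'g) \<Rightarrow> ('g \<Rightarrow> 'g \<Rightarrow> 'g) \<Rightarrow> bool" where
  "lie_algebra smul br \<longleftrightarrow>
     vector_space smul \<and>
     (\<forall>a x y z. br (smul a x + y) z = smul a (br x z) + br y z) \<and>
     (\<forall>a x y z. br z (smul a x + y) = smul a (br z x) + br z y) \<and>
     (\<forall>x. br x x = 0) \<and>
     (\<forall>x y z. br x (br y z) + br y (br z x) + br z (br x y) = 0)"

definition good_form ::
  "(complex \<Rightarrow> 'g::ab_group_add \<Rightarrow> 'g) \<Rightarrow> ('g \<Rightarrow> 'g \<Rightarrow> 'g) \<Rightarrow> ('g \<Rightarrow> 'g \<Rightarrow> complex) \<Rightarrow> bool" where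
  "good_form smul br Bf \<longleftrightarrow>
     (\<forall>a x y z. Bf (smul a x + y) z = a * Bf x z + Bf y z) \<and>
     (\<forall>x y. Bf x y = Bf y x) \<and>
     (\<forall>x. (\<forall>y. Bf x y = 0) \<longrightarrow> x = 0) \<and>
     (\<forall>x y z. Bf (br x y) z = Bf x (br y z))"

definition ad_diagonalizable ::
  "(complex \<Rightarrow> 'g::ab_group_add \<Rightarrow> 'g) \<Rightarrow> ('g \<Rightarrow> 'g \<Rightarrow> 'g) \<Rightarrow> 'g \<Rightarrow> bool" where
  "ad_diagonalizable smul br h \<longleftrightarrow>
     module.span smul (\<Union>c. {x. br h x = smul c x}) = UNIV"

definition Hdual ::
  "(complex \<Rightarrow> 'g::ab_group_add \<Rightarrow> 'g) \<Rightarrow> 'g set \<Rightarrow> ('g \<Rightarrow> complex) set" where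
  "Hdual smul H = {\<alpha>. (\<forall>x. x \<notin> H \<longrightarrow> \<alpha> x = 0) \<and>
      (\<forall>a x y. x \<in> H \<longrightarrow> y \<in> H \<longrightarrow> \<alpha> (smul a x + y) = a * \<alpha> x + \<alpha> y)}"

definition rootspace ::
  "(complex \<Rightarrow> 'g::ab_group_add \<Rightarrow> 'g) \<Rightarrow> ('g \<Rightarrow> 'g \<Rightarrow> 'g) \<Rightarrow> 'g set \<Rightarrow> ('g \<Rightarrow> complex) \<Rightarrow> 'g set" where
  "rootspace smul br H \<alpha> = {x. \<forall>h\<in>H. br h x = smul (\<alpha> h) x}"

definition roots ::
  "(complex \<Rightarrow> 'g::ab_group_add \<Rightarrow> 'g) \<Rightarrow> ('g \<Rightarrow> 'g \<Rightarrow> 'g) \<Rightarrow> 'g set \<Rightarrow> ('g \<Rightarrow> complex) set" where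
  "roots smul br H = {\<alpha> \<in> Hdual smul H. rootspace smul br H \<alpha> \<noteq> {0}}"

definition tvec :: "('g \<Rightarrow> 'g \<Rightarrow> complex) \<Rightarrow> 'g set \<Rightarrow> ('g \<Rightarrow> complex) \<Rightarrow> 'g" where
  "tvec Bf H \<alpha> = (THE t. t \<in> H \<and> (\<forall>h\<in>H. Bf t h = \<alpha> h))"

definition dform ::
  "('g \<Rightarrow> 'g \<Rightarrow> complex) \<Rightarrow> 'g set \<Rightarrow> ('g \<Rightarrow> complex) \<Rightarrow> ('g \<Rightarrow> complex) \<Rightarrow> complex" where
  "dform Bf H \<alpha> \<beta> = Bf (tvec Bf H \<alpha>) (tvec Bf H \<beta>)"

definition roots_x ::
  "(complex \<Rightarrow> 'g::ab_group_add \<Rightarrow> 'g) \<Rightarrow> ('g \<Rightarrow> 'g \<Rightarrow> 'g) \<Rightarrow> ('g \<Rightarrow> 'g \<Rightarrow> complex) \<Rightarrow> 'g set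
     \<Rightarrow> ('g \<Rightarrow> complex) set" where
  "roots_x smul br Bf H = {\<alpha> \<in> roots smul br H. dform Bf H \<alpha> \<alpha> \<noteq> 0}"

text \<open>The topology
  on the finite dimensional space H^* is the topology of pointwise convergence on H
  (which coincides with the usual one).\<close>
definition discrete_in_Hdual :: "'g set \<Rightarrow> ('g \<Rightarrow> complex) set \<Rightarrow> bool" where
  "discrete_in_Hdual H S \<longleftrightarrow>
     (\<forall>\<alpha>\<in>S. \<exists>F e. finite F \<and> F \<subseteq> H \<and> e > 0 \<and>
        (\<forall>\<beta>\<in>S. (\<forall>h\<in>F. cmod (\<beta> h - \<alpha> h) < e) \<longrightarrow> \<beta> = \<alpha>))"

definition gen_reductive ::
  "(complex \<Rightarrow> 'g::ab_group_add \<Rightarrow> 'g) \<Rightarrow> ('g \<Rightarrow> 'g \<Rightarrow> 'g) \<Rightarrow> ('g \<Rightarrow> 'g \<Rightarrow> complex) \<Rightarrow> 'g set \<Rightarrow> bool" where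
  "gen_reductive smul br Bf H \<longleftrightarrow>
     lie_algebra smul br \<and>
     good_form smul br Bf \<and>
     module.subspace smul H \<and>
     (\<forall>x\<in>H. \<forall>y\<in>H. br x y \<in> H) \<and>
     (\<exists>B. finite B \<and> B \<subseteq> H \<and> module.span smul B = H) \<and>
     H \<noteq> {0} \<and>
     (\<forall>x\<in>H. \<forall>y\<in>H. br x y = 0) \<and>
     {x. \<forall>h\<in>H. br h x = 0} = H \<and>
     (\<forall>h\<in>H. ad_diagonalizable smul br h) \<and>
     (\<forall>\<alpha>\<in>roots_x smul br Bf H. \<forall>x\<in>rootspace smul br H \<alpha>. \<forall>y. \<exists>n. (br x ^^ n) y = 0) \<and>
     discrete_in_Hdual H (roots smul br H) \<and>
     roots_x smul br Bf H \<noteq> {}"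

definition rspan :: "('g \<Rightarrow> complex) set \<Rightarrow> ('g \<Rightarrow> complex) set" where
  "rspan S = {v. \<exists>F c. finite F \<and> F \<subseteq> S \<and>
                 v = (\<lambda>x. \<Sum>\<alpha>\<in>F. complex_of_real (c \<alpha>) * \<alpha> x)}"

definition radical ::
  "(complex \<Rightarrow> 'g::ab_group_add \<Rightarrow> 'g) \<Rightarrow> ('g \<Rightarrow> 'g \<Rightarrow> 'g) \<Rightarrow> ('g \<Rightarrow> 'g \<Rightarrow> complex) \<Rightarrow> 'g set
     \<Rightarrow> ('g \<Rightarrow> complex) set" where
  "radical smul br Bf H =
     {v \<in> rspan (roots smul br H). \<forall>w\<in>rspan (roots smul br H). dform Bf H v w = 0}"

definition component ::
  "(complex \<Rightarrow> 'g::ab_group_add \<Rightarrow> 'g) \<Rightarrow> ('g \<Rightarrow> 'g \<Rightarrow> 'g) \<Rightarrow> ('g \<Rightarrow> 'g \<Rightarrow> complex) \<Rightarrow> 'g set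
     \<Rightarrow> ('g \<Rightarrow> complex) \<Rightarrow> ('g \<Rightarrow> complex) set" where
  "component smul br Bf H \<alpha>0 =
     {\<beta>. (\<lambda>\<alpha> \<gamma>. \<alpha> \<in> roots_x smul br Bf H \<and> \<gamma> \<in> roots_x smul br Bf H \<and> dform Bf H \<alpha> \<gamma> \<noteq> 0)\<^sup>*\<^sup>* \<alpha>0 \<beta>}"

end

theory Submission
  imports Defs "HOL-Library.FuncSet" "HOL-Library.Function_Algebras"
begin

locale rvs = vector_space scale for scale :: "real \<Rightarrow> 'b::ab_group_add \<Rightarrow> 'b"

locale comb = rvs scale for scale :: "real \<Rightarrow> 'b::ab_group_add \<Rightarrow> 'b" +
  fixes B :: "'b \<Rightarrow> 'b \<Rightarrow> real" and R S A :: "'b set" and a0 :: 'b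
  assumes SR: "S \<subseteq> R"
  and Badd: "\<And>x y z. x \<in> span R \<Longrightarrow> y \<in> span R \<Longrightarrow> z \<in> span R \<Longrightarrow> B (x + y) z = B x z + B y z"
  and Bsc: "\<And>r x z. x \<in> span R \<Longrightarrow> z \<in> span R \<Longrightarrow> B (scale r x) z = r * B x z"
  and Bsym: "\<And>x y. x \<in> span R \<Longrightarrow> y \<in> span R \<Longrightarrow> B x y = B y x"
  and Spos: "\<And>x. x \<in> S \<Longrightarrow> B x x > 0"
  and Sneg: "\<And>x. x \<in> S \<Longrightarrow> - x \<in> S"
  and H2: "\<And>x y. x \<in> S \<Longrightarrow> y \<in> R \<Longrightarrow> B x y \<noteq> 0 \<Longrightarrow> y \<in> S \<or> B y y = 0"
  and H3: "\<And>x y. x \<in> S \<Longrightarrow> y \<in> R \<Longrightarrow> \<exists>n::int. 2 * B y x = of_int n * B x x \<and>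
            (\<forall>k::int. (0 \<le> k \<and> k \<le> n \<or> n \<le> k \<and> k \<le> 0) \<longrightarrow> y - scale (of_int k) x \<in> R)"
  and Afin: "finite A" and AS: "A \<subseteq> S" and SA: "S \<subseteq> span A"
  and a0S: "a0 \<in> S"
  and conn: "\<And>y. y \<in> S \<Longrightarrow> (\<lambda>x y. x \<in> S \<and> y \<in> S \<and> B x y \<noteq> 0)\<^sup>*\<^sup>* a0 y"
begin

lemma inR: "x \<in> R \<Longrightarrow> x \<in> span R" by (rule span_base)
lemma SinR: "x \<in> S \<Longrightarrow> x \<in> span R" using SR span_base by blast
lemma spanS_R: "x \<in> span S \<Longrightarrow> x \<in> span R" using SR span_mono by blast

lemma Bzero: "z \<in> span R \<Longrightarrow> B 0 z = 0"
  using Bsc[where r=0 and x=0 and z=z] by (simp add: span_zero)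
lemma Bminus: "x \<in> span R \<Longrightarrow> z \<in> span R \<Longrightarrow> B (- x) z = - B x z"
  using Bsc[where r="-1" and x=x and z=z] by simp
lemma Bdiff: "x \<in> span R \<Longrightarrow> y \<in> span R \<Longrightarrow> z \<in> span R \<Longrightarrow> B (x - y) z = B x z - B y z"
  using Badd[of x "-y" z] Bminus[of y z] by (simp add: span_neg)
lemma Badd2: "x \<in> span R \<Longrightarrow> y \<in> span R \<Longrightarrow> z \<in> span R \<Longrightarrow> B z (x + y) = B z x + B z y"
  by (metis Badd Bsym span_add)
lemma Bsc2: "x \<in> span R \<Longrightarrow> z \<in> span R \<Longrightarrow> B z (scale r x) = r * B z x"
  by (metis Bsc Bsym span_scale)
lemma Bzero2: "z \<in> span R \<Longrightarrow> B z 0 = 0"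
  by (metis Bzero Bsym span_zero)
lemma Bminus2: "x \<in> span R \<Longrightarrow> z \<in> span R \<Longrightarrow> B z (- x) = - B z x"
  by (metis Bminus Bsym span_neg)
lemma Bdiff2: "x \<in> span R \<Longrightarrow> y \<in> span R \<Longrightarrow> z \<in> span R \<Longrightarrow> B z (x - y) = B z x - B z y"
  by (metis Bdiff Bsym span_diff)

lemma Bnorm: assumes "x \<in> span R" "y \<in> span R"
  shows "B (x - scale k y) (x - scale k y) = B x x - 2 * k * B x y + k^2 * B y y"
proof -
  have s: "scale k y \<in> span R" using assms span_scale by blast
  have "B (x - scale k y) (x - scale k y) = B x (x - scale k y) - B (scale k y) (x - scale k y)"
    using assms s by (simp add: Bdiff span_diff)
  also have "\<dots> = B x x - B x (scale k y) - (B (scale k y) x - B (scale k y) (scale k y))"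
    using assms s by (simp add: Bdiff2)
  also have "\<dots> = B x x - k * B x y - (k * B y x - k * (k * B y y))"
    using assms s by (simp add: Bsc Bsc2)
  finally show ?thesis using Bsym[OF assms] by (simp add: power2_eq_square algebra_simps)
qed

lemma Bmix: assumes "x \<in> span R" "y \<in> span R"
  shows "B y (x - scale k y) = B y x - k * B y y"
  using assms by (simp add: Bdiff2 Bsc2 span_scale)

lemma bound_pos:
  assumes a: "\<alpha> \<in> S" and g: "\<gamma> \<in> R" and n: "2 * B \<gamma> \<alpha> = of_int n * B \<alpha> \<alpha>" and n5: "n \<ge> 5"
  shows False
proof -
  define a where "a = B \<alpha> \<alpha>"
  have apos: "a > 0" using Spos[OF a] a_def by simp
  obtain n' where n': "2 * B \<gamma> \<alpha> = of_int n' * B \<alpha> \<alpha>"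
     and str: "\<And>k::int. (0 \<le> k \<and> k \<le> n' \<or> n' \<le> k \<and> k \<le> 0) \<Longrightarrow> \<gamma> - scale (of_int k) \<alpha> \<in> R"
    using H3[OF a g] by blast
  have "of_int n' * a = of_int n * a" using n n' a_def by simp
  hence nn: "n' = n" using apos by simp
  have r1: "\<gamma> - scale 1 \<alpha> \<in> R" using str[of 1] nn n5 by simp
  have r2: "\<gamma> - scale 2 \<alpha> \<in> R" using str[of 2] nn n5 by simp
  have aR: "\<alpha> \<in> span R" using SinR[OF a] .
  have gR: "\<gamma> \<in> span R" using inR[OF g] .
  have Bga: "B \<gamma> \<alpha> = of_int n * a / 2" using n a_def by simp
  have Bag: "B \<alpha> \<gamma> = of_int n * a / 2" using Bga Bsym[OF aR gR] by simp
  have n5r: "real_of_int n \<ge> 5" using n5 by simp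
  have mix1: "B \<alpha> (\<gamma> - scale 1 \<alpha>) = a * (of_int n / 2 - 1)"
    using Bmix[OF gR aR, of 1] Bag a_def by (simp add: algebra_simps)
  have mix1nz: "B \<alpha> (\<gamma> - scale 1 \<alpha>) \<noteq> 0" using mix1 apos n5r by simp
  have mix2: "B \<alpha> (\<gamma> - scale 2 \<alpha>) = a * (of_int n / 2 - 2)"
    using Bmix[OF gR aR, of 2] Bag a_def by (simp add: algebra_simps)
  have mix2nz: "B \<alpha> (\<gamma> - scale 2 \<alpha>) \<noteq> 0" using mix2 apos n5r by simp
  have nrm1: "B (\<gamma> - scale 1 \<alpha>) (\<gamma> - scale 1 \<alpha>) = B \<gamma> \<gamma> - of_int n * a + a"
    using Bnorm[OF gR aR, of 1] Bga a_def by simp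
  have nrm2: "B (\<gamma> - scale 2 \<alpha>) (\<gamma> - scale 2 \<alpha>) = B \<gamma> \<gamma> - 2 * of_int n * a + 4 * a"
    using Bnorm[OF gR aR, of 2] Bga a_def by simp
  have na5: "of_int n * a \<ge> 5 * a" using mult_right_mono[OF n5r] apos by simp
  have neg_contra: "\<And>\<rho>. \<rho> \<in> R \<Longrightarrow> B \<alpha> \<rho> \<noteq> 0 \<Longrightarrow> B \<rho> \<rho> < 0 \<Longrightarrow> False"
    using H2[OF a] Spos by fastforce
  show False
  proof (cases "\<gamma> \<in> S")
    case False
    have "of_int n * a > 0" using apos n5r by simp
    hence "B \<alpha> \<gamma> \<noteq> 0" using Bag by simp
    hence "B \<gamma> \<gamma> = 0" using H2[OF a g] False by blast
    hence "B (\<gamma> - scale 1 \<alpha>) (\<gamma> - scale 1 \<alpha>) < 0" using nrm1 apos na5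
      by linarith
    then show False using neg_contra[OF r1 mix1nz] by blast
  next
    case True
    have aR': "\<alpha> \<in> R" using a SR by blast
    obtain m where m: "2 * B \<alpha> \<gamma> = of_int m * B \<gamma> \<gamma>" using H3[OF True aR'] by blast
    have gpos: "B \<gamma> \<gamma> > 0" using Spos[OF True] .
    have "of_int m * B \<gamma> \<gamma> = of_int n * a" using m Bag by simp
    moreover have "of_int n * a > 0" using apos n5r by simp
    ultimately have "of_int m * B \<gamma> \<gamma> > 0" by simp
    hence "real_of_int m > 0" using gpos by (simp add: zero_less_mult_iff)
    hence mpos: "m \<ge> 1" by simp
    show False
    proof (cases "m = 1")
      case True
      hence "B \<gamma> \<gamma> = of_int n * a" using m Bag by simp
      hence "B (\<gamma> - scale 2 \<alpha>) (\<gamma> - scale 2 \<alpha>) < 0" using nrm2 apos na5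
        by linarith
      then show False using neg_contra[OF r2 mix2nz] by blast
    next
      case False
      hence m2: "real_of_int m \<ge> 2" using mpos by simp
      have "2 * B \<gamma> \<gamma> \<le> of_int m * B \<gamma> \<gamma>" using m2 gpos by (simp add: mult_right_mono)
      hence "2 * B \<gamma> \<gamma> \<le> of_int n * a" using m Bag by simp
      hence "B (\<gamma> - scale 1 \<alpha>) (\<gamma> - scale 1 \<alpha>) < 0" using nrm1 apos na5
        by linarith
      then show False using neg_contra[OF r1 mix1nz] by blast
    qed
  qed
qed

lemma bound:
  assumes a: "\<alpha> \<in> S" and g: "\<gamma> \<in> R" and n: "2 * B \<gamma> \<alpha> = of_int n * B \<alpha> \<alpha>"
  shows "\<bar>n\<bar> \<le> 4"
proof (rule ccontr)
  assume "\<not> \<bar>n\<bar> \<le> 4"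
  hence "n \<ge> 5 \<or> -n \<ge> 5" by linarith
  then show False
  proof
    assume "n \<ge> 5" then show False using bound_pos[OF a g n] by blast
  next
    assume nn: "-n \<ge> 5"
    have a': "-\<alpha> \<in> S" using Sneg[OF a] .
    have aR: "\<alpha> \<in> span R" using SinR[OF a] .
    have gR: "\<gamma> \<in> span R" using inR[OF g] .
    have "2 * B \<gamma> (-\<alpha>) = of_int (-n) * B (-\<alpha>) (-\<alpha>)"
      using n by (simp add: Bminus Bminus2 aR gR span_neg)
    then show False using bound_pos[OF a' g _ nn] by blast
  qed
qed

definition rf :: "'b \<Rightarrow> 'b \<Rightarrow> 'b" where
  "rf \<alpha> x = x - scale (2 * B x \<alpha> / B \<alpha> \<alpha>) \<alpha>"
definition gf :: "'b \<Rightarrow> 'b \<Rightarrow> real" where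
  "gf \<gamma> = (\<lambda>x. if x \<in> span S then B \<gamma> x else 0)"
definition GG :: "('b \<Rightarrow> real) set" where "GG = gf ` R"
definition P :: "'b \<Rightarrow> 'b \<Rightarrow> real" where "P x y = (\<Sum>g\<in>GG. g x * g y)"

lemma gf_add: "\<gamma> \<in> R \<Longrightarrow> x \<in> span S \<Longrightarrow> y \<in> span S \<Longrightarrow> gf \<gamma> (x + y) = gf \<gamma> x + gf \<gamma> y"
  unfolding gf_def by (simp add: span_add Badd2 spanS_R inR)
lemma gf_scale: "\<gamma> \<in> R \<Longrightarrow> x \<in> span S \<Longrightarrow> gf \<gamma> (scale r x) = r * gf \<gamma> x"
  unfolding gf_def by (simp add: span_scale Bsc2 spanS_R inR)
lemma gf_minus: "\<gamma> \<in> R \<Longrightarrow> x \<in> span S \<Longrightarrow> gf \<gamma> (- x) = - gf \<gamma> x"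
  unfolding gf_def by (simp add: span_neg Bminus2 spanS_R inR)
lemma gf_diff: "\<gamma> \<in> R \<Longrightarrow> x \<in> span S \<Longrightarrow> y \<in> span S \<Longrightarrow> gf \<gamma> (x - y) = gf \<gamma> x - gf \<gamma> y"
  unfolding gf_def by (simp add: span_diff Bdiff2 spanS_R inR)
lemma gf_zero: "\<gamma> \<in> R \<Longrightarrow> gf \<gamma> 0 = 0"
  unfolding gf_def by (simp add: span_zero Bzero2 inR)

lemma span_A_S: "span A = span S"
  using AS SA span_mono span_subspace subspace_span by (metis subset_antisym)

lemma gf_eq:
  assumes g: "\<gamma> \<in> R" and d: "\<delta> \<in> R" and eq: "\<And>x. x \<in> A \<Longrightarrow> B \<gamma> x = B \<delta> x"
  shows "gf \<gamma> = gf \<delta>"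
proof
  fix x
  show "gf \<gamma> x = gf \<delta> x"
  proof (cases "x \<in> span S")
    case True
    hence "x \<in> span A" using span_A_S by simp
    hence "x \<in> span A \<and> B \<gamma> x = B \<delta> x"
    proof (induction rule: span_induct_alt)
      case base
      then show ?case using g d by (simp add: span_zero Bzero2 inR)
    next
      case (step c x y)
      have xR: "x \<in> span R" using step(1) AS SinR by blast
      have yR: "y \<in> span R" using step(2) span_A_S spanS_R by blast
      have cx: "scale c x \<in> span R" using xR span_scale by blast
      have "B \<gamma> (scale c x + y) = c * B \<gamma> x + B \<gamma> y" using g cx yR xR by (simp add: Badd2 Bsc2 inR)
      moreover have "B \<delta> (scale c x + y) = c * B \<delta> x + B \<delta> y" using d cx yR xR by (simp add: Badd2 Bsc2 inR)
      ultimately show ?case using step eq by (simp add: span_add span_scale span_base)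
    qed
    then show ?thesis unfolding gf_def using True by simp
  next
    case False
    then show ?thesis unfolding gf_def by simp
  qed
qed

lemma finite_GG: "finite GG"
proof -
  define vals where "vals = (\<lambda>\<alpha>. (\<lambda>k::int. of_int k * B \<alpha> \<alpha> / 2) ` {-4..4})"
  have fv: "finite (vals \<alpha>)" for \<alpha> unfolding vals_def by simp
  have fin: "finite (PiE A vals)" using Afin fv by (simp add: finite_PiE)
  have sub: "(\<lambda>g. restrict g A) ` GG \<subseteq> PiE A vals"
  proof
    fix h assume "h \<in> (\<lambda>g. restrict g A) ` GG"
    then obtain \<gamma> where g: "\<gamma> \<in> R" and h: "h = restrict (gf \<gamma>) A" unfolding GG_def by blast
    show "h \<in> PiE A vals"
      unfolding h
    proof (rule restrict_PiE_iff[THEN iffD2], intro ballI)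
      fix \<alpha> assume aA: "\<alpha> \<in> A"
      hence aS: "\<alpha> \<in> S" using AS by blast
      obtain n where n: "2 * B \<gamma> \<alpha> = of_int n * B \<alpha> \<alpha>" using H3[OF aS g] by blast
      have nb: "n \<in> {-4..4}" using bound[OF aS g n] by (simp add: abs_le_iff)
      have "\<alpha> \<in> span S" using aS span_base by blast
      hence "gf \<gamma> \<alpha> = of_int n * B \<alpha> \<alpha> / 2" unfolding gf_def using n by simp
      then show "gf \<gamma> \<alpha> \<in> vals \<alpha>" unfolding vals_def using nb by blast
    qed
  qed
  have inj: "inj_on (\<lambda>g. restrict g A) GG"
  proof (rule inj_onI)
    fix g1 g2 assume g1: "g1 \<in> GG" and g2: "g2 \<in> GG" and eq: "restrict g1 A = restrict g2 A"
    obtain \<gamma> where gg: "\<gamma> \<in> R" "g1 = gf \<gamma>" using g1 unfolding GG_def by blast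
    obtain \<delta> where dd: "\<delta> \<in> R" "g2 = gf \<delta>" using g2 unfolding GG_def by blast
    have "B \<gamma> x = B \<delta> x" if "x \<in> A" for x
    proof -
      have "restrict g1 A x = restrict g2 A x" using eq by simp
      hence "gf \<gamma> x = gf \<delta> x" using that gg dd by simp
      moreover have "x \<in> span S" using that AS span_base by blast
      ultimately show ?thesis unfolding gf_def by simp
    qed
    then show "g1 = g2" using gf_eq[OF gg(1) dd(1)] gg dd by simp
  qed
  show ?thesis using finite_subset[OF sub fin] inj finite_imageD by blast
qed

lemma rf_span: "\<alpha> \<in> S \<Longrightarrow> x \<in> span S \<Longrightarrow> rf \<alpha> x \<in> span S"
  unfolding rf_def by (simp add: span_diff span_scale span_base)

lemma rf_nspan: assumes a: "\<alpha> \<in> S" and x: "x \<notin> span S" shows "rf \<alpha> x \<notin> span S"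
proof
  assume "rf \<alpha> x \<in> span S"
  hence "rf \<alpha> x + scale (2 * B x \<alpha> / B \<alpha> \<alpha>) \<alpha> \<in> span S"
    using a by (simp add: span_add span_scale span_base)
  hence "x \<in> span S" unfolding rf_def by simp
  then show False using x by blast
qed

lemma rf_rf: assumes a: "\<alpha> \<in> S" and x: "x \<in> span S" shows "rf \<alpha> (rf \<alpha> x) = x"
proof -
  have aR: "\<alpha> \<in> span R" using SinR[OF a] .
  have xR: "x \<in> span R" using spanS_R[OF x] .
  have apos: "B \<alpha> \<alpha> > 0" using Spos[OF a] .
  define c where "c = 2 * B x \<alpha> / B \<alpha> \<alpha>"
  have "B (rf \<alpha> x) \<alpha> = B x \<alpha> - c * B \<alpha> \<alpha>" unfolding rf_def c_def[symmetric]
    using aR xR by (simp add: Bdiff Bsc span_scale)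
  also have "\<dots> = - B x \<alpha>" unfolding c_def using apos by simp
  finally have "2 * B (rf \<alpha> x) \<alpha> / B \<alpha> \<alpha> = - c" unfolding c_def by simp
  then show ?thesis unfolding rf_def[of \<alpha> "rf \<alpha> x"] by (simp add: rf_def c_def[symmetric])
qed

lemma rf_root: assumes a: "\<alpha> \<in> S" and g: "\<gamma> \<in> R" shows "rf \<alpha> \<gamma> \<in> R"
proof -
  obtain n where n: "2 * B \<gamma> \<alpha> = of_int n * B \<alpha> \<alpha>"
    and str: "\<forall>k::int. (0 \<le> k \<and> k \<le> n \<or> n \<le> k \<and> k \<le> 0) \<longrightarrow> \<gamma> - scale (of_int k) \<alpha> \<in> R"
    using H3[OF a g] by blast
  have apos: "B \<alpha> \<alpha> > 0" using Spos[OF a] .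
  have "2 * B \<gamma> \<alpha> / B \<alpha> \<alpha> = of_int n" using n apos by simp
  hence "rf \<alpha> \<gamma> = \<gamma> - scale (of_int n) \<alpha>" unfolding rf_def by simp
  moreover have "\<gamma> - scale (of_int n) \<alpha> \<in> R" using str by (cases "n \<ge> 0") auto
  ultimately show ?thesis by simp
qed

lemma gf_rf: assumes a: "\<alpha> \<in> S" and g: "\<gamma> \<in> R" shows "gf \<gamma> \<circ> rf \<alpha> = gf (rf \<alpha> \<gamma>)"
proof
  fix x
  show "(gf \<gamma> \<circ> rf \<alpha>) x = gf (rf \<alpha> \<gamma>) x"
  proof (cases "x \<in> span S")
    case True
    have aR: "\<alpha> \<in> span R" using SinR[OF a] .
    have xR: "x \<in> span R" using spanS_R[OF True] .
    have gR: "\<gamma> \<in> span R" using inR[OF g] .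
    have "(gf \<gamma> \<circ> rf \<alpha>) x = B \<gamma> (rf \<alpha> x)" unfolding gf_def using rf_span[OF a True] by simp
    also have "\<dots> = B \<gamma> x - (2 * B x \<alpha> / B \<alpha> \<alpha>) * B \<gamma> \<alpha>" unfolding rf_def
      using aR xR gR by (simp add: Bdiff2 Bsc2 span_scale)
    also have "\<dots> = B \<gamma> x - (2 * B \<gamma> \<alpha> / B \<alpha> \<alpha>) * B \<alpha> x"
      using Bsym[OF xR aR] by simp
    also have "\<dots> = B (rf \<alpha> \<gamma>) x" unfolding rf_def
      using aR xR gR by (simp add: Bdiff Bsc span_scale)
    also have "\<dots> = gf (rf \<alpha> \<gamma>) x" unfolding gf_def using True by simp
    finally show ?thesis .
  next
    case False
    then show ?thesis unfolding gf_def using rf_nspan[OF a False] by simp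
  qed
qed

lemma GG_bij: assumes a: "\<alpha> \<in> S" shows "bij_betw (\<lambda>g. g \<circ> rf \<alpha>) GG GG"
proof -
  have maps: "(\<lambda>g. g \<circ> rf \<alpha>) \<in> GG \<rightarrow> GG"
    unfolding GG_def using gf_rf[OF a] rf_root[OF a] by auto
  have inv: "(g \<circ> rf \<alpha>) \<circ> rf \<alpha> = g" if "g \<in> GG" for g
  proof
    fix x
    obtain \<gamma> where g: "g = gf \<gamma>" using \<open>g \<in> GG\<close> unfolding GG_def by blast
    show "((g \<circ> rf \<alpha>) \<circ> rf \<alpha>) x = g x"
    proof (cases "x \<in> span S")
      case True then show ?thesis using rf_rf[OF a True] by simp
    next
      case False
      then show ?thesis unfolding g gf_def using rf_nspan[OF a] by simp
    qed
  qed
  show ?thesis by (rule bij_betwI[OF maps maps]) (use inv in auto)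
qed

lemma GG_lin:
  assumes "g \<in> GG"
  shows "\<And>x y. x \<in> span S \<Longrightarrow> y \<in> span S \<Longrightarrow> g (x + y) = g x + g y"
    and "\<And>x r. x \<in> span S \<Longrightarrow> g (scale r x) = r * g x"
    and "\<And>x. x \<in> span S \<Longrightarrow> g (- x) = - g x"
    and "\<And>x y. x \<in> span S \<Longrightarrow> y \<in> span S \<Longrightarrow> g (x - y) = g x - g y"
    and "g 0 = 0"
  using assms unfolding GG_def by (auto simp: gf_add gf_scale gf_minus gf_diff gf_zero)

lemma P_sym: "P x y = P y x" unfolding P_def by (simp add: mult.commute)

lemma P_orth: assumes a: "\<alpha> \<in> S" and x: "x \<in> span S" and o: "B x \<alpha> = 0"
  shows "P \<alpha> x = 0"
proof -
  have aS: "\<alpha> \<in> span S" using a span_base by blast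
  have rx: "rf \<alpha> x = x" unfolding rf_def using o by simp
  have apos: "B \<alpha> \<alpha> > 0" using Spos[OF a] .
  have ra: "rf \<alpha> \<alpha> = - \<alpha>"
  proof -
    have "rf \<alpha> \<alpha> = \<alpha> - scale 2 \<alpha>" unfolding rf_def using apos by simp
    also have "\<dots> = \<alpha> - (scale 1 \<alpha> + scale 1 \<alpha>)" using scale_left_distrib[of 1 1 \<alpha>] by simp
    finally show ?thesis by simp
  qed
  have "P \<alpha> x = (\<Sum>g\<in>GG. (g \<circ> rf \<alpha>) \<alpha> * (g \<circ> rf \<alpha>) x)"
    unfolding P_def using sum.reindex_bij_betw[OF GG_bij[OF a], of "\<lambda>g. g \<alpha> * g x"] by simp
  also have "\<dots> = (\<Sum>g\<in>GG. - (g \<alpha> * g x))"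
    by (rule sum.cong) (auto simp: rx ra GG_lin(3)[OF _ aS])
  also have "\<dots> = - P \<alpha> x" unfolding P_def by (simp add: sum_negf)
  finally show ?thesis by simp
qed

lemma P_lin2:
  assumes "x \<in> span S" "y \<in> span S"
  shows "P z (x + y) = P z x + P z y" and "P z (scale r x) = r * P z x"
  unfolding P_def using assms
  by (auto simp: GG_lin sum.distrib sum_distrib_left algebra_simps intro!: sum.cong)

lemma P_lin1:
  assumes "x \<in> span S" "y \<in> span S"
  shows "P (x + y) z = P x z + P y z" and "P (scale r x) z = r * P x z"
  using P_lin2[OF assms] P_sym by metis+

definition lam :: "'b \<Rightarrow> real" where "lam \<alpha> = P \<alpha> \<alpha> / B \<alpha> \<alpha>"

lemma P_root: assumes a: "\<alpha> \<in> S" and y: "y \<in> span S" shows "P \<alpha> y = lam \<alpha> * B \<alpha> y"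
proof -
  have aS: "\<alpha> \<in> span S" using a span_base by blast
  have aR: "\<alpha> \<in> span R" using SinR[OF a] .
  have yR: "y \<in> span R" using spanS_R[OF y] .
  have apos: "B \<alpha> \<alpha> > 0" using Spos[OF a] .
  define t where "t = B y \<alpha> / B \<alpha> \<alpha>"
  define x where "x = y - scale t \<alpha>"
  have x: "x \<in> span S" unfolding x_def using y aS by (simp add: span_diff span_scale)
  have "B x \<alpha> = B y \<alpha> - t * B \<alpha> \<alpha>" unfolding x_def using aR yR by (simp add: Bdiff Bsc span_scale)
  hence o: "B x \<alpha> = 0" unfolding t_def using apos by simp
  have yx: "y = x + scale t \<alpha>" unfolding x_def by simp
  have "P \<alpha> y = P \<alpha> x + t * P \<alpha> \<alpha>" unfolding yx using P_lin2[OF x, of "scale t \<alpha>"] P_lin2[OF aS aS]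
    by (simp add: span_scale aS)
  also have "\<dots> = t * P \<alpha> \<alpha>" using P_orth[OF a x o] by simp
  also have "\<dots> = lam \<alpha> * B \<alpha> y" unfolding t_def lam_def using Bsym[OF yR aR] by simp
  finally show ?thesis .
qed

lemma lam_pos: assumes a: "\<alpha> \<in> S" shows "lam \<alpha> > 0"
proof -
  have aS: "\<alpha> \<in> span S" using a span_base by blast
  have aR': "\<alpha> \<in> R" using a SR by blast
  have gin: "gf \<alpha> \<in> GG" unfolding GG_def using aR' by blast
  have "gf \<alpha> \<alpha> * gf \<alpha> \<alpha> \<le> P \<alpha> \<alpha>" unfolding P_def
    by (rule member_le_sum[OF gin]) (auto intro: finite_GG)
  moreover have "gf \<alpha> \<alpha> = B \<alpha> \<alpha>" unfolding gf_def using aS by simp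
  moreover have "B \<alpha> \<alpha> > 0" using Spos[OF a] .
  ultimately have "P \<alpha> \<alpha> > 0" by (smt (verit) mult_pos_pos)
  then show ?thesis unfolding lam_def using Spos[OF a] by simp
qed

lemma lam_const: assumes "y \<in> S" shows "lam y = lam a0"
proof -
  have "(\<lambda>x y. x \<in> S \<and> y \<in> S \<and> B x y \<noteq> 0)\<^sup>*\<^sup>* a0 y" using conn[OF assms] .
  then show ?thesis
  proof (induction rule: rtranclp_induct)
    case base then show ?case by simp
  next
    case (step y z)
    have yS: "y \<in> span S" and zS: "z \<in> span S" using step(2) span_base by blast+
    have "lam y * B y z = P y z" using P_root[of y z] step(2) zS by simp
    also have "\<dots> = P z y" by (rule P_sym)
    also have "\<dots> = lam z * B z y" using P_root[of z y] step(2) yS by simp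
    finally have "lam y * B y z = lam z * B y z"
      using Bsym[OF spanS_R[OF yS] spanS_R[OF zS]] by simp
    hence "lam z = lam y" using step(2) by simp
    then show ?case using step(3) by simp
  qed
qed

lemma P_span: assumes v: "v \<in> span S" and y: "y \<in> span S" shows "P v y = lam a0 * B v y"
proof -
  have "v \<in> span S \<and> P v y = lam a0 * B v y" using v
  proof (induction rule: span_induct_alt)
    case base
    have "P 0 y = 0" unfolding P_def by (simp add: GG_lin(5))
    then show ?case using Bzero[OF spanS_R[OF y]] by (simp add: span_zero)
  next
    case (step c x z)
    have xS: "x \<in> span S" using step(1) span_base by blast
    have zS: "z \<in> span S" using step(2) by blast
    have cx: "scale c x \<in> span S" using xS span_scale by blast
    have "P (scale c x + z) y = c * P x y + P z y" using P_lin1[OF cx zS] P_lin1[OF xS xS] by simp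
    also have "\<dots> = c * (lam a0 * B x y) + lam a0 * B z y"
      using P_root[OF step(1) y] lam_const[OF step(1)] step(2) by simp
    also have "\<dots> = lam a0 * B (scale c x + z) y"
      using spanS_R[OF cx] spanS_R[OF zS] spanS_R[OF xS] spanS_R[OF y]
      by (simp add: Badd Bsc algebra_simps)
    finally show ?case using cx zS span_add by blast
  qed
  then show ?thesis by simp
qed

theorem comb_result:
  assumes v: "v \<in> span S"
  shows "0 \<le> B v v \<and> (B v v = 0 \<longrightarrow> (\<forall>\<gamma>\<in>R. B \<gamma> v = 0))"
proof -
  have l: "lam a0 > 0" using lam_pos[OF a0S] .
  have Pv: "P v v = lam a0 * B v v" using P_span[OF v v] .
  have Pnn: "P v v \<ge> 0" unfolding P_def by (auto intro!: sum_nonneg)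
  have c1: "0 \<le> B v v" using Pv Pnn l by (simp add: zero_le_mult_iff)
  have c2: "\<forall>\<gamma>\<in>R. B \<gamma> v = 0" if z: "B v v = 0"
  proof
    fix \<gamma> assume g: "\<gamma> \<in> R"
    have "P v v = 0" using Pv z by simp
    hence "\<forall>g\<in>GG. g v * g v = 0" unfolding P_def
      using sum_nonneg_eq_0_iff[OF finite_GG, of "\<lambda>g. g v * g v"] by simp
    moreover have "gf \<gamma> \<in> GG" unfolding GG_def using g by blast
    ultimately have "gf \<gamma> v = 0" by simp
    then show "B \<gamma> v = 0" unfolding gf_def using v by simp
  qed
  show ?thesis using c1 c2 by blast
qed

end


locale GR =
  fixes smul :: "complex \<Rightarrow> 'g::ab_group_add \<Rightarrow> 'g" and br :: "'g \<Rightarrow> 'g \<Rightarrow> 'g"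
    and Bf :: "'g \<Rightarrow> 'g \<Rightarrow> complex" and H :: "'g set"
  assumes gr: "gen_reductive smul br Bf H"
begin
lemma vs: "vector_space smul" using gr unfolding gen_reductive_def lie_algebra_def by blast
end

sublocale GR \<subseteq> V: vector_space smul by (rule vs)

context GR
begin

abbreviation G where "G \<alpha> \<equiv> rootspace smul br H \<alpha>"

lemma lie: "lie_algebra smul br" using gr unfolding gen_reductive_def by blast
lemma form: "good_form smul br Bf" using gr unfolding gen_reductive_def by blast
lemma Hsub: "V.subspace H" using gr unfolding gen_reductive_def by blast
lemma Habel: "h \<in> H \<Longrightarrow> k \<in> H \<Longrightarrow> br h k = 0" using gr unfolding gen_reductive_def by blast
lemma Hcent: "(\<forall>h\<in>H. br h x = 0) \<longleftrightarrow> x \<in> H"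
proof -
  have "{x. \<forall>h\<in>H. br h x = 0} = H" using gr unfolding gen_reductive_def by blast
  then show ?thesis by blast
qed
lemma Hdiag: "h \<in> H \<Longrightarrow> V.span (\<Union>c. {x. br h x = smul c x}) = UNIV"
  using gr unfolding gen_reductive_def ad_diagonalizable_def by blast
lemma Hfin: obtains B0 where "finite B0" "B0 \<subseteq> H" "V.span B0 = H"
  using gr unfolding gen_reductive_def by blast
lemma nilp: "\<alpha> \<in> roots_x smul br Bf H \<Longrightarrow> x \<in> G \<alpha> \<Longrightarrow> \<exists>n. (br x ^^ n) y = 0"
  using gr unfolding gen_reductive_def by blast

lemma br_l: "br (smul a x + y) z = smul a (br x z) + br y z"
  using lie unfolding lie_algebra_def by blast
lemma br_r: "br z (smul a x + y) = smul a (br z x) + br z y"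
  using lie unfolding lie_algebra_def by blast
lemma br_self: "br x x = 0"
  using lie unfolding lie_algebra_def by blast
lemma jacobi: "br x (br y z) + br y (br z x) + br z (br x y) = 0"
  using lie unfolding lie_algebra_def by blast

lemma br_add_l: "br (x + y) z = br x z + br y z" using br_l[of 1 x y z] by simp
lemma br_add_r: "br z (x + y) = br z x + br z y" using br_r[of z 1 x y] by simp
lemma br_zero_l[simp]: "br 0 z = 0" using br_add_l[of 0 0 z] by simp
lemma br_zero_r[simp]: "br z 0 = 0" using br_add_r[of z 0 0] by simp
lemma br_smul_l: "br (smul a x) z = smul a (br x z)" using br_l[of a x 0 z] by simp
lemma br_smul_r: "br z (smul a x) = smul a (br z x)" using br_r[of z a x 0] by simp
lemma br_neg_l: "br (- x) z = - br x z"
proof -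
  have "br x z + br (- x) z = 0" using br_add_l[of x "-x" z] by simp
  then show ?thesis by (metis minus_unique)
qed
lemma br_neg_r: "br z (- x) = - br z x"
proof -
  have "br z x + br z (- x) = 0" using br_add_r[of z x "-x"] by simp
  then show ?thesis by (metis minus_unique)
qed
lemma br_diff_l: "br (x - y) z = br x z - br y z"
  using br_add_l[of x "-y" z] br_neg_l[of y z] by simp
lemma br_diff_r: "br z (x - y) = br z x - br z y"
  using br_add_r[of z x "-y"] br_neg_r[of z y] by simp
lemma br_anti: "br x y = - br y x"
proof -
  have "br (x + y) (x + y) = br x (x + y) + br y (x + y)" by (rule br_add_l)
  also have "\<dots> = (br x x + br x y) + (br y x + br y y)" by (simp only: br_add_r)
  also have "\<dots> = br x y + br y x" by (simp only: br_self add_0_left add_0_right)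
  finally have "br x y + br y x = 0" using br_self[of "x+y"] by simp
  hence "br y x + br x y = 0" by (simp add: add.commute)
  then show ?thesis by (metis minus_unique)
qed
lemma jac_der: "br x (br y z) = br y (br x z) + br (br x y) z"
proof -
  have "br y (br z x) = - br y (br x z)" by (metis br_anti br_neg_r)
  moreover have "br z (br x y) = - br (br x y) z" by (rule br_anti)
  ultimately have "br x (br y z) + (- br y (br x z)) + (- br (br x y) z) = 0" using jacobi[of x y z] by simp
  then show ?thesis by (simp add: algebra_simps)
qed
lemma br_sum_r: "br z (sum f I) = (\<Sum>i\<in>I. br z (f i))"
  by (induction I rule: infinite_finite_induct) (auto simp: br_add_r)

lemma Bf_l: "Bf (smul a x + y) z = a * Bf x z + Bf y z"
  using form unfolding good_form_def by blast
lemma Bf_sym: "Bf x y = Bf y x"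
  using form unfolding good_form_def by blast
lemma Bf_nd: "(\<And>y. Bf x y = 0) \<Longrightarrow> x = 0"
  using form unfolding good_form_def by blast
lemma Bf_inv: "Bf (br x y) z = Bf x (br y z)"
  using form unfolding good_form_def by blast

lemma Bf_add_l: "Bf (x + y) z = Bf x z + Bf y z" using Bf_l[of 1 x y z] by simp
lemma Bf_zero_l[simp]: "Bf 0 z = 0" using Bf_add_l[of 0 0 z] by simp
lemma Bf_smul_l: "Bf (smul a x) z = a * Bf x z" using Bf_l[of a x 0 z] by simp
lemma Bf_add_r: "Bf z (x + y) = Bf z x + Bf z y" by (metis Bf_add_l Bf_sym)
lemma Bf_zero_r[simp]: "Bf z 0 = 0" by (metis Bf_zero_l Bf_sym)
lemma Bf_smul_r: "Bf z (smul a x) = a * Bf z x" by (metis Bf_smul_l Bf_sym)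
lemma Bf_neg_l: "Bf (- x) z = - Bf x z"
proof -
  have "Bf x z + Bf (- x) z = 0" using Bf_add_l[of x "-x" z] by simp
  then show ?thesis by (metis minus_unique)
qed
lemma Bf_neg_r: "Bf z (- x) = - Bf z x" by (metis Bf_neg_l Bf_sym)
lemma Bf_diff_l: "Bf (x - y) z = Bf x z - Bf y z"
  using Bf_add_l[of x "-y" z] Bf_neg_l[of y z] by simp
lemma Bf_diff_r: "Bf z (x - y) = Bf z x - Bf z y" by (metis Bf_diff_l Bf_sym)
lemma Bf_sum_l: "Bf (sum f I) z = (\<Sum>i\<in>I. Bf (f i) z)"
  by (induction I rule: infinite_finite_induct) (auto simp: Bf_add_l)

lemma H0: "0 \<in> H" using Hsub V.subspace_0 by blast
lemma Hadd: "x \<in> H \<Longrightarrow> y \<in> H \<Longrightarrow> x + y \<in> H" using Hsub V.subspace_add by blast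
lemma Hsmul: "x \<in> H \<Longrightarrow> smul a x \<in> H" using Hsub V.subspace_scale by blast
lemma Hneg: "x \<in> H \<Longrightarrow> - x \<in> H" using Hsub V.subspace_neg by blast
lemma Hdiff: "x \<in> H \<Longrightarrow> y \<in> H \<Longrightarrow> x - y \<in> H" using Hsub V.subspace_diff by blast

lemma G_iff: "x \<in> G \<alpha> \<longleftrightarrow> (\<forall>h\<in>H. br h x = smul (\<alpha> h) x)"
  unfolding rootspace_def by simp
lemma G_zero: "0 \<in> G \<alpha>" unfolding G_iff by simp
lemma G_add: "x \<in> G \<alpha> \<Longrightarrow> y \<in> G \<alpha> \<Longrightarrow> x + y \<in> G \<alpha>"
  unfolding G_iff by (simp add: br_add_r V.scale_right_distrib)
lemma G_smul: "x \<in> G \<alpha> \<Longrightarrow> smul a x \<in> G \<alpha>"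
  unfolding G_iff by (simp add: br_smul_r V.scale_left_commute)
lemma G_sub: "V.subspace (G \<alpha>)"
  by (rule V.subspaceI) (auto intro: G_zero G_add G_smul)

lemma root_br: "x \<in> G \<alpha> \<Longrightarrow> y \<in> G \<beta> \<Longrightarrow> h \<in> H \<Longrightarrow> br h (br x y) = smul (\<alpha> h + \<beta> h) (br x y)"
  unfolding G_iff by (simp add: jac_der[of h x y] br_smul_l br_smul_r V.scale_left_distrib add.commute)

lemma Bf_orth:
  assumes x: "x \<in> G \<alpha>" and y: "y \<in> G \<beta>" and h: "h \<in> H" and ne: "\<alpha> h + \<beta> h \<noteq> 0"
  shows "Bf x y = 0"
proof -
  have "Bf (br h x) y = \<alpha> h * Bf x y" using x h unfolding G_iff by (simp add: Bf_smul_l)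
  moreover have "Bf (br h x) y = - (\<beta> h * Bf x y)"
  proof -
    have "Bf (br h x) y = - Bf (br x h) y" by (metis br_anti Bf_neg_l)
    also have "\<dots> = - Bf x (br h y)" by (simp add: Bf_inv)
    also have "\<dots> = - (\<beta> h * Bf x y)" using y h unfolding G_iff by (simp add: Bf_smul_r)
    finally show ?thesis .
  qed
  ultimately have e: "\<alpha> h * Bf x y = - (\<beta> h * Bf x y)" by simp
  have "(\<alpha> h + \<beta> h) * Bf x y = \<alpha> h * Bf x y + \<beta> h * Bf x y" by (simp add: distrib_right)
  also have "\<dots> = 0" using e by simp
  finally have "(\<alpha> h + \<beta> h) * Bf x y = 0" .
  then show ?thesis using ne by simp
qed


definition JE :: "'g set \<Rightarrow> ('g \<Rightarrow> complex) \<Rightarrow> 'g set" where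
  "JE C \<chi> = {x. \<forall>h\<in>C. br h x = smul (\<chi> h) x}"

lemma E_sub: "V.subspace {y. br b y = smul c y}"
  by (rule V.subspaceI) (auto simp: br_add_r br_smul_r V.scale_right_distrib V.scale_left_commute)

lemma JE_sub: "V.subspace (JE C \<chi>)"
  unfolding JE_def
  by (rule V.subspaceI) (auto simp: br_add_r br_smul_r V.scale_right_distrib V.scale_left_commute)

lemma split_lemma:
  assumes W: "V.subspace W" and inv: "\<And>y. y \<in> W \<Longrightarrow> br b y \<in> W"
  shows "finite L \<Longrightarrow> (\<forall>c\<in>L. br b (w c) = smul c (w c)) \<Longrightarrow> sum w L \<in> W \<Longrightarrow> \<forall>c\<in>L. w c \<in> W"
proof (induction L arbitrary: w rule: finite_induct)
  case empty then show ?case by simp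
next
  case (insert l L)
  have s: "w l + sum w L \<in> W" using insert.prems(2) insert.hyps(1,2) by simp
  have T: "br b (w l + sum w L) - smul l (w l + sum w L) \<in> W"
    using s inv W V.subspace_diff V.subspace_scale by blast
  have evs: "\<forall>c\<in>insert l L. br b (w c) = smul c (w c)" using insert.prems(1) .
  have e1: "br b (w l + sum w L) = smul l (w l) + (\<Sum>c\<in>L. smul c (w c))"
  proof -
    have "br b (w l + sum w L) = br b (w l) + (\<Sum>c\<in>L. br b (w c))" by (simp only: br_add_r br_sum_r)
    also have "\<dots> = smul l (w l) + (\<Sum>c\<in>L. smul c (w c))"
      using evs by (intro arg_cong2[where f="(+)"] sum.cong) auto
    finally show ?thesis .
  qed
  have e2: "smul l (w l + sum w L) = smul l (w l) + (\<Sum>c\<in>L. smul l (w c))"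
    by (simp only: V.scale_right_distrib V.scale_sum_right)
  define w' where "w' c = smul (c - l) (w c)" for c
  have e3: "br b (w l + sum w L) - smul l (w l + sum w L) = sum w' L"
  proof -
    have "br b (w l + sum w L) - smul l (w l + sum w L) = (\<Sum>c\<in>L. smul c (w c)) - (\<Sum>c\<in>L. smul l (w c))"
      unfolding e1 e2 by simp
    also have "\<dots> = (\<Sum>c\<in>L. smul c (w c) - smul l (w c))" by (rule sum_subtractf[symmetric])
    also have "\<dots> = sum w' L" unfolding w'_def by (rule sum.cong) (auto simp: V.scale_left_diff_distrib)
    finally show ?thesis .
  qed
  have ev': "\<forall>c\<in>L. br b (w' c) = smul c (w' c)"
  proof
    fix c assume "c \<in> L"
    hence "br b (w c) = smul c (w c)" using evs by blast
    then show "br b (w' c) = smul c (w' c)" unfolding w'_def by (simp add: br_smul_r V.scale_left_commute)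
  qed
  have "\<forall>c\<in>L. w' c \<in> W" using insert.IH[OF ev'] T e3 by simp
  hence wL: "\<forall>c\<in>L. w c \<in> W"
  proof (intro ballI)
    fix c assume c: "c \<in> L" and h: "\<forall>c\<in>L. w' c \<in> W"
    have "c \<noteq> l" using c insert.hyps(2) by blast
    hence "w c = smul (1 / (c - l)) (w' c)" unfolding w'_def by simp
    moreover have "w' c \<in> W" using h c by blast
    ultimately show "w c \<in> W" using W V.subspace_scale by simp
  qed
  have sL: "sum w L \<in> W" using wL by (intro V.subspace_sum[OF W]) blast
  have "(w l + sum w L) - sum w L \<in> W" by (rule V.subspace_diff[OF W s sL])
  hence "w l \<in> W" by (simp only: add_diff_cancel)
  then show ?case using wL by blast
qed

lemma eig_decomp:
  assumes W: "V.subspace W" and inv: "\<And>y. y \<in> W \<Longrightarrow> br b y \<in> W" and xW: "x \<in> W"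
    and xs: "x \<in> V.span (\<Union>c. {y. br b y = smul c y})"
  shows "x \<in> V.span (\<Union>c. W \<inter> {y. br b y = smul c y})"
proof -
  obtain t r where t: "finite t" "t \<subseteq> (\<Union>c. {y. br b y = smul c y})" and x: "x = (\<Sum>a\<in>t. smul (r a) a)"
    using xs unfolding V.span_explicit by blast
  define ev where "ev a = (SOME c. br b a = smul c a)" for a
  have ev: "br b a = smul (ev a) a" if "a \<in> t" for a
  proof -
    have "\<exists>c. br b a = smul c a" using t that by blast
    then show ?thesis unfolding ev_def by (rule someI_ex)
  qed
  define w where "w c = (\<Sum>a\<in>{a. a \<in> t \<and> ev a = c}. smul (r a) a)" for c
  have x2: "x = sum w (ev ` t)" unfolding x w_def by (rule sum.image_gen[OF t(1)])
  have wE: "\<forall>c\<in>ev`t. br b (w c) = smul c (w c)"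
  proof
    fix c assume "c \<in> ev ` t"
    have "w c \<in> {y. br b y = smul c y}" unfolding w_def
      by (rule V.subspace_sum[OF E_sub]) (auto simp: ev br_smul_r mult.commute)
    then show "br b (w c) = smul c (w c)" by simp
  qed
  have "\<forall>c\<in>ev`t. w c \<in> W" using split_lemma[OF W inv, of "ev ` t" w] t(1) wE xW x2 by simp
  hence "\<forall>c\<in>ev`t. w c \<in> V.span (\<Union>c. W \<inter> {y. br b y = smul c y})"
    using wE by (blast intro: V.span_base)
  then show ?thesis unfolding x2 by (blast intro: V.span_sum)
qed

lemma JE_span: assumes "finite C" "C \<subseteq> H" shows "V.span (\<Union>\<chi>. JE C \<chi>) = UNIV"
  using assms
proof (induction C rule: finite_induct)
  case empty
  have "(\<Union>\<chi>. JE {} \<chi>) = UNIV" unfolding JE_def by simp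
  then show ?case by simp
next
  case (insert b C)
  have IH: "V.span (\<Union>\<chi>. JE C \<chi>) = UNIV" using insert by simp
  have bH: "b \<in> H" using insert by simp
  have sub: "(\<Union>\<chi>. JE C \<chi>) \<subseteq> V.span (\<Union>\<chi>. JE (insert b C) \<chi>)"
  proof
    fix x assume "x \<in> (\<Union>\<chi>. JE C \<chi>)"
    then obtain \<chi> where xj: "x \<in> JE C \<chi>" by blast
    have inv: "br b y \<in> JE C \<chi>" if y: "y \<in> JE C \<chi>" for y
      unfolding JE_def
    proof (rule CollectI, rule ballI)
      fix h assume h: "h \<in> C"
      have hH: "h \<in> H" using h insert by blast
      have "br h (br b y) = br b (br h y) + br (br h b) y" by (rule jac_der)
      also have "\<dots> = br b (smul (\<chi> h) y)" using y h Habel[OF hH bH] unfolding JE_def by simp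
      finally show "br h (br b y) = smul (\<chi> h) (br b y)" by (simp add: br_smul_r)
    qed
    have xs: "x \<in> V.span (\<Union>c. {y. br b y = smul c y})" using Hdiag[OF bH] by simp
    have x1: "x \<in> V.span (\<Union>c. JE C \<chi> \<inter> {y. br b y = smul c y})"
      by (rule eig_decomp[OF JE_sub inv xj xs])
    have "(\<Union>c. JE C \<chi> \<inter> {y. br b y = smul c y}) \<subseteq> (\<Union>\<chi>. JE (insert b C) \<chi>)"
    proof
      fix y assume "y \<in> (\<Union>c. JE C \<chi> \<inter> {y. br b y = smul c y})"
      then obtain c where y1: "y \<in> JE C \<chi>" and y2: "br b y = smul c y" by blast
      have "y \<in> JE (insert b C) (\<chi>(b := c))" unfolding JE_def
        using y1 y2 insert(2) unfolding JE_def by auto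
      then show "y \<in> (\<Union>\<chi>. JE (insert b C) \<chi>)" by blast
    qed
    then show "x \<in> V.span (\<Union>\<chi>. JE (insert b C) \<chi>)" using x1 V.span_mono by blast
  qed
  have "V.span (\<Union>\<chi>. JE C \<chi>) \<subseteq> V.span (\<Union>\<chi>. JE (insert b C) \<chi>)"
    using V.span_minimal[OF sub] by simp
  then show ?case using IH by auto
qed

lemma smul_cancel: "smul c x = smul d x \<Longrightarrow> x \<noteq> 0 \<Longrightarrow> c = d"
proof -
  assume "smul c x = smul d x" "x \<noteq> 0"
  hence "smul (c - d) x = 0" by (simp add: V.scale_left_diff_distrib)
  then show "c = d" using \<open>x \<noteq> 0\<close> by simp
qed

lemma zero_Hdual: "(\<lambda>_. 0) \<in> Hdual smul H" unfolding Hdual_def by simp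

lemma decomp: "V.span (\<Union>\<alpha>\<in>Hdual smul H. G \<alpha>) = UNIV"
proof -
  obtain B0 where B0: "finite B0" "B0 \<subseteq> H" "V.span B0 = H" by (rule Hfin)
  have "(\<Union>\<chi>. JE B0 \<chi>) \<subseteq> (\<Union>\<alpha>\<in>Hdual smul H. G \<alpha>)"
  proof
    fix x assume "x \<in> (\<Union>\<chi>. JE B0 \<chi>)"
    then obtain \<chi> where xj: "\<forall>h\<in>B0. br h x = smul (\<chi> h) x" unfolding JE_def by blast
    show "x \<in> (\<Union>\<alpha>\<in>Hdual smul H. G \<alpha>)"
    proof (cases "x = 0")
      case True
      then show ?thesis using zero_Hdual G_zero by blast
    next
      case False
      define Sx where "Sx = {h. \<exists>c. br h x = smul c x}"
      have "V.subspace Sx" unfolding Sx_def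
      proof (rule V.subspaceI)
        show "0 \<in> {h. \<exists>c. br h x = smul c x}" by (auto intro: exI[of _ 0])
      next
        fix h1 h2 assume "h1 \<in> {h. \<exists>c. br h x = smul c x}" "h2 \<in> {h. \<exists>c. br h x = smul c x}"
        then obtain c1 c2 where "br h1 x = smul c1 x" "br h2 x = smul c2 x" by blast
        then have "br (h1 + h2) x = smul (c1 + c2) x" by (simp add: br_add_l V.scale_left_distrib)
        then show "h1 + h2 \<in> {h. \<exists>c. br h x = smul c x}" by blast
      next
        fix a h1 assume "h1 \<in> {h. \<exists>c. br h x = smul c x}"
        then obtain c1 where "br h1 x = smul c1 x" by blast
        then have "br (smul a h1) x = smul (a * c1) x" by (simp add: br_smul_l)
        then show "smul a h1 \<in> {h. \<exists>c. br h x = smul c x}" by blast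
      qed
      moreover have "B0 \<subseteq> Sx" unfolding Sx_def using xj by blast
      ultimately have HS: "H \<subseteq> Sx" using V.span_minimal B0(3) by blast
      define \<alpha> where "\<alpha> h = (if h \<in> H then (THE c. br h x = smul c x) else 0)" for h
      have \<alpha>h: "br h x = smul (\<alpha> h) x" if hH: "h \<in> H" for h
      proof -
        obtain c where c: "br h x = smul c x" using HS hH unfolding Sx_def by blast
        have ex: "\<exists>!c. br h x = smul c x"
          by (rule ex1I[of _ c]) (use c smul_cancel[OF _ False] in auto)
        show ?thesis unfolding \<alpha>_def using hH theI'[OF ex] by simp
      qed
      have "\<alpha> \<in> Hdual smul H" unfolding Hdual_def
      proof (intro CollectI conjI allI impI)
        fix h assume "h \<notin> H" then show "\<alpha> h = 0" unfolding \<alpha>_def by simp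
      next
        fix a h1 h2 assume h1: "h1 \<in> H" and h2: "h2 \<in> H"
        have hh: "smul a h1 + h2 \<in> H" using h1 h2 Hadd Hsmul by blast
        have "smul (\<alpha> (smul a h1 + h2)) x = br (smul a h1 + h2) x" using \<alpha>h[OF hh] by simp
        also have "\<dots> = smul (a * \<alpha> h1 + \<alpha> h2) x"
          using \<alpha>h[OF h1] \<alpha>h[OF h2] by (simp add: br_l V.scale_left_distrib)
        finally show "\<alpha> (smul a h1 + h2) = a * \<alpha> h1 + \<alpha> h2" using smul_cancel False by blast
      qed
      moreover have "x \<in> G \<alpha>" unfolding G_iff using \<alpha>h by blast
      ultimately show ?thesis by blast
    qed
  qed
  hence "V.span (\<Union>\<chi>. JE B0 \<chi>) \<subseteq> V.span (\<Union>\<alpha>\<in>Hdual smul H. G \<alpha>)" by (rule V.span_mono)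
  then show ?thesis using JE_span[OF B0(1) B0(2)] by auto
qed


lemma G0: "G (\<lambda>_. 0) = H"
  using Hcent unfolding rootspace_def by auto

lemma Bf_span_zero:
  assumes "\<And>\<alpha> y. \<alpha> \<in> Hdual smul H \<Longrightarrow> y \<in> G \<alpha> \<Longrightarrow> Bf x y = 0"
  shows "Bf x z = 0"
proof -
  have "z \<in> V.span (\<Union>\<alpha>\<in>Hdual smul H. G \<alpha>)" using decomp by simp
  then show ?thesis
  proof (induction rule: V.span_induct_alt)
    case base show ?case by simp
  next
    case (step c y w)
    then show ?case using assms by (auto simp: Bf_add_r Bf_smul_r)
  qed
qed

lemma ndH: assumes h: "h \<in> H" and z: "\<And>k. k \<in> H \<Longrightarrow> Bf h k = 0" shows "h = 0"
proof (rule Bf_nd)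
  fix y
  show "Bf h y = 0"
  proof (rule Bf_span_zero)
    fix \<alpha> y assume a: "\<alpha> \<in> Hdual smul H" and y: "y \<in> G \<alpha>"
    show "Bf h y = 0"
    proof (cases "\<exists>k\<in>H. \<alpha> k \<noteq> 0")
      case True
      then obtain k where k: "k \<in> H" "\<alpha> k \<noteq> 0" by blast
      have hG: "h \<in> G (\<lambda>_. 0)" using G0 h by simp
      show ?thesis by (rule Bf_orth[OF hG y k(1)]) (use k in simp)
    next
      case False
      hence "\<forall>k\<in>H. br k y = 0" using y unfolding G_iff by simp
      hence "y \<in> H" using Hcent by blast
      then show ?thesis using z by blast
    qed
  qed
qed

lemma Hdual_lin: "\<alpha> \<in> Hdual smul H \<Longrightarrow> x \<in> H \<Longrightarrow> y \<in> H \<Longrightarrow> \<alpha> (smul a x + y) = a * \<alpha> x + \<alpha> y"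
  unfolding Hdual_def by blast
lemma Hdual_out: "\<alpha> \<in> Hdual smul H \<Longrightarrow> x \<notin> H \<Longrightarrow> \<alpha> x = 0"
  unfolding Hdual_def by blast
lemma Hdual_zero: "\<alpha> \<in> Hdual smul H \<Longrightarrow> \<alpha> 0 = 0"
  using Hdual_lin[of \<alpha> 0 0 1] H0 by simp
lemma Hdual_smul: "\<alpha> \<in> Hdual smul H \<Longrightarrow> x \<in> H \<Longrightarrow> \<alpha> (smul a x) = a * \<alpha> x"
  using Hdual_lin[of \<alpha> x 0 a] H0 Hdual_zero by simp
lemma Hdual_neg_arg: "\<alpha> \<in> Hdual smul H \<Longrightarrow> x \<in> H \<Longrightarrow> \<alpha> (- x) = - \<alpha> x"
  using Hdual_smul[of \<alpha> x "-1"] by (simp add: V.scale_minus_left[of 1, simplified])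
lemma Hdual_comb: "\<alpha> \<in> Hdual smul H \<Longrightarrow> \<beta> \<in> Hdual smul H \<Longrightarrow> (\<lambda>x. a * \<alpha> x + b * \<beta> x) \<in> Hdual smul H"
  unfolding Hdual_def by (auto simp: algebra_simps)
lemma Hdual_uminus: "\<alpha> \<in> Hdual smul H \<Longrightarrow> - \<alpha> \<in> Hdual smul H"
  unfolding Hdual_def by (auto simp: algebra_simps)

lemma pairing:
  assumes a: "\<alpha> \<in> Hdual smul H" and x: "x \<in> G \<alpha>" and x0: "x \<noteq> 0"
  shows "\<exists>y\<in>G (- \<alpha>). Bf x y = 1"
proof -
  have "\<exists>\<beta>\<in>Hdual smul H. \<exists>y\<in>G \<beta>. Bf x y \<noteq> 0"
  proof (rule ccontr)
    assume "\<not> ?thesis"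
    hence "\<And>z. Bf x z = 0" using Bf_span_zero by blast
    hence "x = 0" by (rule Bf_nd)
    then show False using x0 by blast
  qed
  then obtain \<beta> y where b: "\<beta> \<in> Hdual smul H" and y: "y \<in> G \<beta>" and xy: "Bf x y \<noteq> 0" by blast
  have "\<forall>h\<in>H. \<alpha> h + \<beta> h = 0" using Bf_orth[OF x y] xy by blast
  hence "\<beta> = - \<alpha>"
  proof -
    assume s: "\<forall>h\<in>H. \<alpha> h + \<beta> h = 0"
    show "\<beta> = - \<alpha>"
    proof
      fix k show "\<beta> k = (- \<alpha>) k"
      proof (cases "k \<in> H")
        case True then show ?thesis using s by (simp add: eq_neg_iff_add_eq_0 add.commute)
      next
        case False then show ?thesis using Hdual_out[OF a] Hdual_out[OF b] by simp
      qed
    qed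
  qed
  hence yG: "smul (1 / Bf x y) y \<in> G (- \<alpha>)" using y G_smul by simp
  moreover have "Bf x (smul (1 / Bf x y) y) = 1" using xy by (simp add: Bf_smul_r)
  ultimately show ?thesis by blast
qed

definition TV :: "('g \<Rightarrow> complex) set" where
  "TV = {\<phi>. \<exists>t\<in>H. \<forall>h\<in>H. Bf t h = \<phi> h}"

lemma tvec_eq:
  assumes t: "t \<in> H" and p: "\<forall>h\<in>H. Bf t h = \<phi> h"
  shows "tvec Bf H \<phi> = t"
proof -
  have u: "\<exists>!t. t \<in> H \<and> (\<forall>h\<in>H. Bf t h = \<phi> h)"
  proof (rule ex1I[of _ t])
    show "t \<in> H \<and> (\<forall>h\<in>H. Bf t h = \<phi> h)" using t p by blast
  next
    fix t' assume t': "t' \<in> H \<and> (\<forall>h\<in>H. Bf t' h = \<phi> h)"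
    have "t' - t = 0"
      by (rule ndH) (use t t' p Hdiff in \<open>auto simp: Bf_diff_l\<close>)
    then show "t' = t" by simp
  qed
  show ?thesis unfolding tvec_def using theI'[OF u] u t p by blast
qed

lemma tvec:
  assumes "\<phi> \<in> TV" shows "tvec Bf H \<phi> \<in> H" "\<And>h. h \<in> H \<Longrightarrow> Bf (tvec Bf H \<phi>) h = \<phi> h"
proof -
  obtain t where t: "t \<in> H" "\<forall>h\<in>H. Bf t h = \<phi> h" using assms unfolding TV_def by blast
  show "tvec Bf H \<phi> \<in> H" using tvec_eq[OF t] t by simp
  show "\<And>h. h \<in> H \<Longrightarrow> Bf (tvec Bf H \<phi>) h = \<phi> h" using tvec_eq[OF t] t by simp
qed

lemma dform_eval: "\<phi> \<in> TV \<Longrightarrow> \<psi> \<in> TV \<Longrightarrow> dform Bf H \<phi> \<psi> = \<psi> (tvec Bf H \<phi>)"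
  unfolding dform_def by (metis Bf_sym tvec)
lemma dform_eval2: "\<phi> \<in> TV \<Longrightarrow> \<psi> \<in> TV \<Longrightarrow> dform Bf H \<phi> \<psi> = \<phi> (tvec Bf H \<psi>)"
  unfolding dform_def by (metis tvec)
lemma dform_sym: "dform Bf H \<phi> \<psi> = dform Bf H \<psi> \<phi>"
  unfolding dform_def by (rule Bf_sym)

lemma TV_lin: "\<phi> \<in> TV \<Longrightarrow> \<psi> \<in> TV \<Longrightarrow> (\<lambda>x. a * \<phi> x + \<psi> x) \<in> TV"
proof -
  assume p: "\<phi> \<in> TV" and q: "\<psi> \<in> TV"
  obtain t where t: "t \<in> H" "\<forall>h\<in>H. Bf t h = \<phi> h" using p unfolding TV_def by blast
  obtain u where u: "u \<in> H" "\<forall>h\<in>H. Bf u h = \<psi> h" using q unfolding TV_def by blast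
  have "smul a t + u \<in> H" using t u Hadd Hsmul by blast
  moreover have "\<forall>h\<in>H. Bf (smul a t + u) h = a * \<phi> h + \<psi> h" using t u by (simp add: Bf_l)
  ultimately show ?thesis unfolding TV_def by blast
qed

lemma TV_zero: "(\<lambda>_. 0) \<in> TV" unfolding TV_def using H0 Bf_zero_l by blast

lemma bracket_t:
  assumes a: "\<alpha> \<in> Hdual smul H" and x: "x \<in> G \<alpha>" and y: "y \<in> G (- \<alpha>)" and xy: "Bf x y = 1"
  shows "br x y \<in> H" "\<And>h. h \<in> H \<Longrightarrow> Bf (br x y) h = \<alpha> h"
proof -
  have "\<forall>h\<in>H. br h (br x y) = 0" using root_br[OF x y] by simp
  then show "br x y \<in> H" using Hcent by blast
  fix h assume h: "h \<in> H"
  have "Bf (br x y) h = Bf x (br y h)" by (rule Bf_inv)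
  also have "\<dots> = Bf x (- br h y)" by (metis br_anti)
  also have "\<dots> = \<alpha> h" using y h xy unfolding G_iff by (simp add: Bf_neg_r Bf_smul_r)
  finally show "Bf (br x y) h = \<alpha> h" .
qed

lemma roots_Hdual: "\<alpha> \<in> roots smul br H \<Longrightarrow> \<alpha> \<in> Hdual smul H"
  unfolding roots_def by blast
lemma roots_ne: assumes "\<alpha> \<in> roots smul br H" obtains x where "x \<in> G \<alpha>" "x \<noteq> 0"
  using assms G_zero unfolding roots_def by blast

lemma root_TV: assumes r: "\<alpha> \<in> roots smul br H" shows "\<alpha> \<in> TV"
proof -
  obtain x where x: "x \<in> G \<alpha>" "x \<noteq> 0" using roots_ne[OF r] by blast
  have a: "\<alpha> \<in> Hdual smul H" using roots_Hdual[OF r] .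
  obtain y where y: "y \<in> G (- \<alpha>)" "Bf x y = 1" using pairing[OF a x] by blast
  show ?thesis unfolding TV_def using bracket_t[OF a x(1) y] by blast
qed


lemma br_root_G: "e \<in> G \<alpha> \<Longrightarrow> y \<in> G \<gamma> \<Longrightarrow> br e y \<in> G (\<lambda>k. \<alpha> k + \<gamma> k)"
  unfolding G_iff[of "br e y"] using root_br by blast

lemma ad_pow_G: assumes e: "e \<in> G \<alpha>" and x: "x \<in> G \<beta>"
  shows "(br e ^^ j) x \<in> G (\<lambda>k. \<beta> k + of_nat j * \<alpha> k)"
proof (induction j)
  case 0 then show ?case using x by simp
next
  case (Suc j)
  have "br e ((br e ^^ j) x) \<in> G (\<lambda>k. \<alpha> k + (\<beta> k + of_nat j * \<alpha> k))"
    by (rule br_root_G[OF e Suc])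
  moreover have "(\<lambda>k. \<alpha> k + (\<beta> k + of_nat j * \<alpha> k)) = (\<lambda>k. \<beta> k + of_nat (Suc j) * \<alpha> k)"
    by (auto simp: algebra_simps)
  ultimately show ?case by simp
qed

lemma sl2_hw:
  assumes hf: "br h f = smul (-2) f" and ef: "br e f = h"
   and w0: "w \<noteq> 0" and ew: "br e w = 0" and hw: "br h w = smul \<mu> w"
   and fnil: "\<exists>N. (br f ^^ N) w = 0"
  shows "\<exists>N::nat. \<mu> = of_nat N \<and> (\<forall>j\<le>N. (br f ^^ j) w \<noteq> 0)"
proof -
  define wj where "wj j = (br f ^^ j) w" for j
  have wS: "wj (Suc j) = br f (wj j)" for j unfolding wj_def by simp
  have hwj: "br h (wj j) = smul (\<mu> - 2 * of_nat j) (wj j)" for j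
  proof (induction j)
    case 0 then show ?case using hw unfolding wj_def by simp
  next
    case (Suc j)
    have "br h (wj (Suc j)) = br f (br h (wj j)) + br (br h f) (wj j)" unfolding wS by (rule jac_der)
    also have "\<dots> = smul (\<mu> - 2 * of_nat j) (wj (Suc j)) + smul (-2) (wj (Suc j))"
      unfolding Suc hf wS by (simp add: br_smul_r br_smul_l br_neg_l)
    also have "\<dots> = smul ((\<mu> - 2 * of_nat j) + (-2)) (wj (Suc j))"
      by (simp only: V.scale_left_distrib)
    also have "(\<mu> - 2 * of_nat j) + (-2) = \<mu> - 2 * of_nat (Suc j)" by simp
    finally show ?case .
  qed
  have ewj: "br e (wj (Suc j)) = smul (of_nat (Suc j) * (\<mu> - of_nat j)) (wj j)" for j
  proof (induction j)
    case 0
    have "br e (wj (Suc 0)) = br e (br f w)" unfolding wS wj_def by simp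
    also have "\<dots> = br f (br e w) + br (br e f) w" by (rule jac_der)
    also have "\<dots> = smul \<mu> w" using ew ef hw by simp
    finally show ?case unfolding wj_def by simp
  next
    case (Suc j)
    have "br e (wj (Suc (Suc j))) = br f (br e (wj (Suc j))) + br (br e f) (wj (Suc j))"
      unfolding wS[of "Suc j"] by (rule jac_der)
    also have "\<dots> = smul (of_nat (Suc j) * (\<mu> - of_nat j)) (wj (Suc j)) + smul (\<mu> - 2 * of_nat (Suc j)) (wj (Suc j))"
      unfolding Suc ef hwj by (simp add: br_smul_r wS)
    also have "\<dots> = smul (of_nat (Suc j) * (\<mu> - of_nat j) + (\<mu> - 2 * of_nat (Suc j))) (wj (Suc j))"
      by (simp only: V.scale_left_distrib)
    also have "of_nat (Suc j) * (\<mu> - of_nat j) + (\<mu> - 2 * of_nat (Suc j)) = of_nat (Suc (Suc j)) * (\<mu> - of_nat (Suc j))"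
      by (simp add: field_simps)
    finally show ?case .
  qed
  obtain N0 where N0: "wj N0 = 0" using fnil unfolding wj_def by blast
  define M where "M = (LEAST n. wj n = 0)"
  have wM: "wj M = 0" unfolding M_def by (rule LeastI[of _ N0]) (rule N0)
  have M0: "M \<noteq> 0" using wM w0 unfolding wj_def by (cases M) auto
  then obtain K where K: "M = Suc K" by (cases M) auto
  have lt: "wj j \<noteq> 0" if "j < M" for j using not_less_Least[of j "\<lambda>n. wj n = 0"] that unfolding M_def by blast
  have wK: "wj K \<noteq> 0" using lt K by simp
  have "smul (of_nat (Suc K) * (\<mu> - of_nat K)) (wj K) = 0" using ewj[of K] wM K by simp
  hence "of_nat (Suc K) * (\<mu> - of_nat K) = (0::complex)" using wK by simp
  hence mu: "\<mu> = of_nat K" by (simp del: of_nat_Suc)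
  have "\<forall>j\<le>K. (br f ^^ j) w \<noteq> 0" using lt K unfolding wj_def by auto
  then show ?thesis using mu by blast
qed

lemma string_gen:
  assumes hH: "h \<in> H" and eG: "e \<in> G \<alpha>" and fG: "f \<in> G (- \<alpha>)" and ah: "\<alpha> h = 2"
   and hf: "br h f = smul (-2) f" and ef: "br e f = h"
   and enil: "\<forall>y. \<exists>N. (br e ^^ N) y = 0" and fnil: "\<forall>y. \<exists>N. (br f ^^ N) y = 0"
   and vG: "v \<in> G \<beta>" and v0: "v \<noteq> 0"
  shows "\<exists>n::int. \<beta> h = of_int n \<and>
     (\<forall>k::int. 0 \<le> k \<and> k \<le> n \<longrightarrow> (\<exists>x. x \<noteq> 0 \<and> x \<in> G (\<lambda>k'. \<beta> k' - of_int k * \<alpha> k')))"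
proof -
  define ev where "ev j = (br e ^^ j) v" for j
  obtain N0 where N0: "ev N0 = 0" using enil unfolding ev_def by blast
  define M where "M = (LEAST n. ev n = 0)"
  have eM: "ev M = 0" unfolding M_def by (rule LeastI[of _ N0]) (rule N0)
  have M0: "M \<noteq> 0" using eM v0 unfolding ev_def by (cases M) auto
  then obtain m where m: "M = Suc m" by (cases M) auto
  have wne: "ev m \<noteq> 0" using not_less_Least[of m "\<lambda>n. ev n = 0"] m unfolding M_def by auto
  define w where "w = ev m"
  have ew: "br e w = 0" using eM m unfolding w_def ev_def by simp
  have wG: "w \<in> G (\<lambda>k. \<beta> k + of_nat m * \<alpha> k)" unfolding w_def ev_def by (rule ad_pow_G[OF eG vG])
  have hw: "br h w = smul (\<beta> h + 2 * of_nat m) w" using wG hH ah unfolding G_iff by (simp add: mult.commute)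
  obtain N where N: "\<beta> h + 2 * of_nat m = of_nat N" and nz: "\<forall>j\<le>N. (br f ^^ j) w \<noteq> 0"
    using sl2_hw[OF hf ef _ ew hw] wne fnil unfolding w_def by blast
  define n where "n = int N - 2 * int m"
  have bh: "\<beta> h = of_int n" unfolding n_def using N by (simp add: algebra_simps)
  have "\<forall>k::int. 0 \<le> k \<and> k \<le> n \<longrightarrow> (\<exists>x. x \<noteq> 0 \<and> x \<in> G (\<lambda>k'. \<beta> k' - of_int k * \<alpha> k'))"
  proof (intro allI impI)
    fix k :: int assume k: "0 \<le> k \<and> k \<le> n"
    define j where "j = nat (int m + k)"
    have jN: "j \<le> N" unfolding j_def using k n_def by (subst nat_le_iff) linarith
    have jk: "int j = int m + k" unfolding j_def using k by simp
    have xG: "(br f ^^ j) w \<in> G (\<lambda>k'. (\<beta> k' + of_nat m * \<alpha> k') + of_nat j * (- \<alpha>) k')"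
      by (rule ad_pow_G[OF fG wG])
    have "(\<lambda>k'. (\<beta> k' + of_nat m * \<alpha> k') + of_nat j * (- \<alpha>) k') = (\<lambda>k'. \<beta> k' - of_int k * \<alpha> k')"
    proof
      fix k'
      have "(of_nat j :: complex) = of_int (int m + k)" using jk by (metis of_int_of_nat_eq)
      then show "(\<beta> k' + of_nat m * \<alpha> k') + of_nat j * (- \<alpha>) k' = \<beta> k' - of_int k * \<alpha> k'"
        by (simp add: algebra_simps)
    qed
    then show "\<exists>x. x \<noteq> 0 \<and> x \<in> G (\<lambda>k'. \<beta> k' - of_int k * \<alpha> k')"
      using xG nz jN by auto
  qed
  then show ?thesis using bh by blast
qed


lemma root_intro: "\<phi> \<in> Hdual smul H \<Longrightarrow> x \<in> G \<phi> \<Longrightarrow> x \<noteq> 0 \<Longrightarrow> \<phi> \<in> roots smul br H"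
  unfolding roots_def by auto

lemma Hdual_diff_int: "\<alpha> \<in> Hdual smul H \<Longrightarrow> \<beta> \<in> Hdual smul H \<Longrightarrow> (\<lambda>z. \<beta> z - c * \<alpha> z) \<in> Hdual smul H"
  unfolding Hdual_def by (auto simp: algebra_simps)

lemma sl2_triple:
  assumes ax: "\<alpha> \<in> roots_x smul br Bf H"
  obtains e f h where "h \<in> H" "e \<in> G \<alpha>" "f \<in> G (- \<alpha>)" "\<alpha> h = 2"
    "br h f = smul (-2) f" "br e f = h" "br h e = smul 2 e"
    "\<forall>y. \<exists>N. (br e ^^ N) y = 0" "\<forall>y. \<exists>N. (br f ^^ N) y = 0"
    "h = smul (2 / dform Bf H \<alpha> \<alpha>) (tvec Bf H \<alpha>)"
    "- \<alpha> \<in> roots_x smul br Bf H"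
proof -
  have r: "\<alpha> \<in> roots smul br H" and dnz: "dform Bf H \<alpha> \<alpha> \<noteq> 0" using ax unfolding roots_x_def by auto
  have a: "\<alpha> \<in> Hdual smul H" using roots_Hdual[OF r] .
  obtain x where x: "x \<in> G \<alpha>" "x \<noteq> 0" using roots_ne[OF r] by blast
  obtain y where y: "y \<in> G (- \<alpha>)" "Bf x y = 1" using pairing[OF a x] by blast
  define t where "t = br x y"
  have tH: "t \<in> H" and tB: "\<And>h. h \<in> H \<Longrightarrow> Bf t h = \<alpha> h" using bracket_t[OF a x(1) y] unfolding t_def by auto
  have tv: "tvec Bf H \<alpha> = t" using tvec_eq[OF tH] tB by blast
  have aTV: "\<alpha> \<in> TV" using root_TV[OF r] .
  define d where "d = dform Bf H \<alpha> \<alpha>"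
  have d: "d = \<alpha> t" unfolding d_def using dform_eval[OF aTV aTV] tv by simp
  have d0: "d \<noteq> 0" using dnz d_def by simp
  define h where "h = smul (2 / d) t"
  define f where "f = smul (2 / d) y"
  have hH: "h \<in> H" unfolding h_def using tH Hsmul by blast
  have ah: "\<alpha> h = 2" unfolding h_def using Hdual_smul[OF a tH] d d0 by simp
  have xt: "br t x = smul d x" using x(1) tH d unfolding G_iff by simp
  have yt: "br t y = smul (- d) y" using y(1) tH d unfolding G_iff by simp
  have he: "br h x = smul 2 x" unfolding h_def using xt d0 by (simp add: br_smul_l)
  have hf: "br h f = smul (-2) f"
  proof -
    have "br h f = smul ((2 / d) * ((2 / d) * (- d))) y" unfolding h_def f_def
      by (simp only: br_smul_l br_smul_r yt V.scale_scale)
    also have "(2 / d) * ((2 / d) * (- d)) = (-2) * (2 / d)" using d0 by (simp add: field_simps)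
    finally show ?thesis unfolding f_def by simp
  qed
  have ef: "br x f = h" unfolding f_def h_def t_def by (simp add: br_smul_r)
  have enil: "\<forall>z. \<exists>N. (br x ^^ N) z = 0" using nilp[OF ax x(1)] by blast
  have y0: "y \<noteq> 0" using y(2) by auto
  have nr: "- \<alpha> \<in> roots smul br H" using root_intro[OF Hdual_uminus[OF a] y(1) y0] .
  have naTV: "- \<alpha> \<in> TV" using root_TV[OF nr] .
  have ntv: "tvec Bf H (- \<alpha>) = - t"
    by (rule tvec_eq) (use tH Hneg tB in \<open>auto simp: Bf_neg_l\<close>)
  have "dform Bf H (- \<alpha>) (- \<alpha>) = d"
    using dform_eval[OF naTV naTV] ntv Hdual_neg_arg[OF a tH] d by simp
  hence nax: "- \<alpha> \<in> roots_x smul br Bf H" unfolding roots_x_def using nr d0 by simp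
  have fG: "f \<in> G (- \<alpha>)" unfolding f_def using y(1) G_smul by blast
  have fnil: "\<forall>z. \<exists>N. (br f ^^ N) z = 0" using nilp[OF nax fG] by blast
  show ?thesis
    by (rule that[OF hH x(1) fG ah hf ef he enil fnil _ nax]) (simp add: h_def tv d_def)
qed

lemma root_string:
  assumes ax: "\<alpha> \<in> roots_x smul br Bf H" and b: "\<beta> \<in> roots smul br H"
  shows "\<exists>n::int. 2 * dform Bf H \<beta> \<alpha> = of_int n * dform Bf H \<alpha> \<alpha> \<and>
    (\<forall>k::int. (0 \<le> k \<and> k \<le> n \<or> n \<le> k \<and> k \<le> 0) \<longrightarrow> (\<lambda>z. \<beta> z - of_int k * \<alpha> z) \<in> roots smul br H)"
proof -
  obtain e f h where hH: "h \<in> H" and eG: "e \<in> G \<alpha>" and fG: "f \<in> G (- \<alpha>)" and ah: "\<alpha> h = 2"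
    and hf: "br h f = smul (-2) f" and ef: "br e f = h" and he: "br h e = smul 2 e"
    and enil: "\<forall>y. \<exists>N. (br e ^^ N) y = 0" and fnil: "\<forall>y. \<exists>N. (br f ^^ N) y = 0"
    and hdef: "h = smul (2 / dform Bf H \<alpha> \<alpha>) (tvec Bf H \<alpha>)"
    and "- \<alpha> \<in> roots_x smul br Bf H"
    by (rule sl2_triple[OF ax])
  have r: "\<alpha> \<in> roots smul br H" and dnz: "dform Bf H \<alpha> \<alpha> \<noteq> 0" using ax unfolding roots_x_def by auto
  have a: "\<alpha> \<in> Hdual smul H" using roots_Hdual[OF r] .
  have bd: "\<beta> \<in> Hdual smul H" using roots_Hdual[OF b] .
  obtain v where vG: "v \<in> G \<beta>" and v0: "v \<noteq> 0" using roots_ne[OF b] by blast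
  obtain n where bh: "\<beta> h = of_int n"
    and P1: "\<forall>k::int. 0 \<le> k \<and> k \<le> n \<longrightarrow> (\<exists>x. x \<noteq> 0 \<and> x \<in> G (\<lambda>k'. \<beta> k' - of_int k * \<alpha> k'))"
    using string_gen[OF hH eG fG ah hf ef enil fnil vG v0] by blast
  have hH': "- h \<in> H" using Hneg[OF hH] .
  have fG': "e \<in> G (- (- \<alpha>))" using eG by simp
  have ah': "(- \<alpha>) (- h) = 2" using Hdual_neg_arg[OF a hH] ah by simp
  have hf': "br (- h) e = smul (-2) e" using he by (simp add: br_neg_l)
  have ef': "br f e = - h" using ef br_anti by metis
  obtain n2 where bh2: "\<beta> (- h) = of_int n2"
    and P2: "\<forall>k::int. 0 \<le> k \<and> k \<le> n2 \<longrightarrow> (\<exists>x. x \<noteq> 0 \<and> x \<in> G (\<lambda>k'. \<beta> k' - of_int k * (- \<alpha>) k'))"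
    using string_gen[OF hH' fG fG' ah' hf' ef' fnil enil vG v0] by blast
  have "of_int n2 = (of_int (- n) :: complex)" using bh2 bh Hdual_neg_arg[OF bd hH] by simp
  hence n2: "n2 = - n" by (simp only: of_int_eq_iff)
  have aTV: "\<alpha> \<in> TV" using root_TV[OF r] .
  have bTV: "\<beta> \<in> TV" using root_TV[OF b] .
  have tH: "tvec Bf H \<alpha> \<in> H" using tvec(1)[OF aTV] .
  have "\<beta> h = (2 / dform Bf H \<alpha> \<alpha>) * \<beta> (tvec Bf H \<alpha>)" unfolding hdef using Hdual_smul[OF bd tH] .
  also have "\<beta> (tvec Bf H \<alpha>) = dform Bf H \<beta> \<alpha>" using dform_eval[OF aTV bTV] dform_sym by metis
  finally have "of_int n = (2 / dform Bf H \<alpha> \<alpha>) * dform Bf H \<beta> \<alpha>" using bh by simp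
  hence rel: "2 * dform Bf H \<beta> \<alpha> = of_int n * dform Bf H \<alpha> \<alpha>" using dnz by (simp add: field_simps)
  have strings: "(\<lambda>z. \<beta> z - of_int k * \<alpha> z) \<in> roots smul br H"
    if k: "0 \<le> k \<and> k \<le> n \<or> n \<le> k \<and> k \<le> 0" for k :: int
  proof -
    have hd: "(\<lambda>z. \<beta> z - of_int k * \<alpha> z) \<in> Hdual smul H" by (rule Hdual_diff_int[OF a bd])
    from k show ?thesis
    proof
      assume "0 \<le> k \<and> k \<le> n"
      then obtain x where "x \<noteq> 0" "x \<in> G (\<lambda>k'. \<beta> k' - of_int k * \<alpha> k')" using P1 by blast
      then show ?thesis using root_intro[OF hd] by blast
    next
      assume kk: "n \<le> k \<and> k \<le> 0"
      have "0 \<le> - k \<and> - k \<le> n2" using kk n2 by simp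
      then obtain x where x: "x \<noteq> 0" "x \<in> G (\<lambda>k'. \<beta> k' - of_int (- k) * (- \<alpha>) k')" using P2 by blast
      have "(\<lambda>k'. \<beta> k' - of_int (- k) * (- \<alpha>) k') = (\<lambda>z. \<beta> z - of_int k * \<alpha> z)" by auto
      then show ?thesis using root_intro[OF hd] x by auto
    qed
  qed
  show ?thesis using rel strings by blast
qed

end


definition rsc :: "real \<Rightarrow> ('g \<Rightarrow> complex) \<Rightarrow> ('g \<Rightarrow> complex)" where
  "rsc r f = (\<lambda>x. complex_of_real r * f x)"

lemma rsc_apply[simp]: "rsc r f x = complex_of_real r * f x" unfolding rsc_def by simp

interpretation FS: rvs rsc
  by unfold_locales (auto simp: rsc_def algebra_simps)

lemma fsum_apply: "(\<Sum>a\<in>t. f a) x = (\<Sum>a\<in>t. f a x)"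
  by (induction t rule: infinite_finite_induct) auto

lemma rspan_eq: "rspan S = FS.span S"
proof -
  have "FS.span S = {(\<Sum>a\<in>t. rsc (r a) a) | t r. finite t \<and> t \<subseteq> S}" by (rule FS.span_explicit)
  also have "\<dots> = rspan S" unfolding rspan_def
    by (auto simp: fsum_apply[abs_def] rsc_def fun_eq_iff)
  finally show ?thesis by simp
qed

context GR
begin

lemma Hdual_FS: "FS.subspace (Hdual smul H)"
  by (rule FS.subspaceI) (auto simp: Hdual_def algebra_simps)

lemma TV_FS: "FS.subspace TV"
proof (rule FS.subspaceI)
  show "0 \<in> TV" using TV_zero by (simp add: zero_fun_def)
next
  fix x y assume "x \<in> TV" "y \<in> TV"
  then have "(\<lambda>z. 1 * x z + y z) \<in> TV" by (rule TV_lin)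
  then show "x + y \<in> TV" by (simp add: plus_fun_def)
next
  fix c x assume "x \<in> TV"
  then have "(\<lambda>z. complex_of_real c * x z + (\<lambda>_. 0) z) \<in> TV" using TV_zero by (rule TV_lin)
  then show "rsc c x \<in> TV" by (simp add: rsc_def)
qed

lemma span_roots_TV: "FS.span (roots smul br H) \<subseteq> TV"
  by (rule FS.span_minimal[OF _ TV_FS]) (auto intro: root_TV)

lemma findim:
  assumes SH: "S \<subseteq> Hdual smul H"
  shows "\<exists>A. finite A \<and> A \<subseteq> S \<and> S \<subseteq> FS.span A"
proof -
  obtain B0 where B0: "finite B0" "B0 \<subseteq> H" "V.span B0 = H" by (rule Hfin)
  obtain A where A: "A \<subseteq> S" "FS.independent A" "S \<subseteq> FS.span A"
    by (rule FS.maximal_independent_subset)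
  define \<rho> where "\<rho> f = (\<lambda>x. if x \<in> B0 then f x else 0)" for f :: "'g \<Rightarrow> complex"
  interpret RH: module_hom rsc rsc \<rho>
    by unfold_locales (auto simp: \<rho>_def rsc_def fun_eq_iff)
  have spanH: "FS.span A \<subseteq> Hdual smul H"
    using A(1) SH FS.span_minimal[OF _ Hdual_FS] by blast
  have vanish: "\<chi> = 0" if chi: "\<chi> \<in> Hdual smul H" and z: "\<forall>b\<in>B0. \<chi> b = 0" for \<chi>
  proof
    fix x
    show "\<chi> x = 0 x"
    proof (cases "x \<in> H")
      case True
      hence "x \<in> V.span B0" using B0 by simp
      hence "x \<in> H \<and> \<chi> x = 0"
      proof (induction rule: V.span_induct_alt)
        case base then show ?case using H0 Hdual_zero[OF chi] by simp
      next
        case (step c x y)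
        have xH: "x \<in> H" using step B0 by blast
        then show ?case using step Hdual_lin[OF chi xH, of y c] z Hadd Hsmul by auto
      qed
      then show ?thesis by simp
    next
      case False then show ?thesis using Hdual_out[OF chi] by simp
    qed
  qed
  have inj: "inj_on \<rho> (FS.span A)"
  proof (rule inj_onI)
    fix \<phi> \<psi> assume p: "\<phi> \<in> FS.span A" and q: "\<psi> \<in> FS.span A" and e: "\<rho> \<phi> = \<rho> \<psi>"
    have d: "\<phi> - \<psi> \<in> Hdual smul H" using p q spanH FS.subspace_diff[OF Hdual_FS] by blast
    have "\<forall>b\<in>B0. (\<phi> - \<psi>) b = 0"
    proof
      fix b assume "b \<in> B0"
      then show "(\<phi> - \<psi>) b = 0" using fun_cong[OF e, of b] unfolding \<rho>_def by simp
    qed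
    then have "\<phi> - \<psi> = 0" using vanish[OF d] by blast
    then show "\<phi> = \<psi>" by simp
  qed
  have indep: "FS.independent (\<rho> ` A)" using RH.independent_injective_image[OF A(2) inj] .
  define T where "T = (\<lambda>b. (\<lambda>x. if x = b then (1::complex) else 0)) ` B0 \<union> (\<lambda>b. (\<lambda>x. if x = b then \<i> else 0)) ` B0"
  have fT: "finite T" unfolding T_def using B0(1) by simp
  have sub: "\<rho> ` A \<subseteq> FS.span T"
  proof
    fix g assume "g \<in> \<rho> ` A"
    then obtain \<phi> where g: "g = \<rho> \<phi>" by blast
    have eq: "\<rho> \<phi> = (\<Sum>b\<in>B0. rsc (Re (\<phi> b)) (\<lambda>x. if x = b then 1 else 0) + rsc (Im (\<phi> b)) (\<lambda>x. if x = b then \<i> else 0))"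
    proof
      fix x
      have "(\<Sum>b\<in>B0. rsc (Re (\<phi> b)) (\<lambda>x. if x = b then 1 else 0) + rsc (Im (\<phi> b)) (\<lambda>x. if x = b then \<i> else 0)) x
          = (\<Sum>b\<in>B0. (if x = b then \<phi> b else 0))"
        unfolding fsum_apply
      proof (rule sum.cong)
        fix b assume "b \<in> B0"
        show "(rsc (Re (\<phi> b)) (\<lambda>x. if x = b then 1 else 0) + rsc (Im (\<phi> b)) (\<lambda>x. if x = b then \<i> else 0)) x
            = (if x = b then \<phi> b else 0)"
          using complex_eq[of "\<phi> b"] by (auto simp: mult.commute)
      qed simp
      also have "\<dots> = \<rho> \<phi> x" unfolding \<rho>_def using B0(1) by (simp add: sum.delta')
      finally show "\<rho> \<phi> x = (\<Sum>b\<in>B0. rsc (Re (\<phi> b)) (\<lambda>x. if x = b then 1 else 0) + rsc (Im (\<phi> b)) (\<lambda>x. if x = b then \<i> else 0)) x"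
        by simp
    qed
    show "g \<in> FS.span T" unfolding g eq
      by (intro FS.span_sum FS.span_add FS.span_scale FS.span_base) (auto simp: T_def)
  qed
  have "finite (\<rho> ` A)" using FS.independent_span_bound[OF fT indep sub] by blast
  moreover have "inj_on \<rho> A" using inj FS.span_superset inj_on_subset by blast
  ultimately have "finite A" using finite_imageD by blast
  then show ?thesis using A by blast
qed

end

lemma (in GR) neg_rx: "\<alpha> \<in> roots_x smul br Bf H \<Longrightarrow> - \<alpha> \<in> roots_x smul br Bf H"
proof -
  assume ax: "\<alpha> \<in> roots_x smul br Bf H"
  obtain e f h where "h \<in> H" "e \<in> G \<alpha>" "f \<in> G (- \<alpha>)" "\<alpha> h = 2"
    "br h f = smul (-2) f" "br e f = h" "br h e = smul 2 e"
    "\<forall>y. \<exists>N. (br e ^^ N) y = 0" "\<forall>y. \<exists>N. (br f ^^ N) y = 0"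
    "h = smul (2 / dform Bf H \<alpha> \<alpha>) (tvec Bf H \<alpha>)"
    and r: "- \<alpha> \<in> roots_x smul br Bf H"
    by (rule sl2_triple[OF ax])
  then show ?thesis by simp
qed

lemma real_nz_Re: "z \<in> \<real> \<Longrightarrow> z \<noteq> 0 \<Longrightarrow> Re z \<noteq> 0"
  by (metis complex_is_Real_iff complex_eqI zero_complex.simps(1) zero_complex.simps(2))

theorem lemma1p9:
  fixes smul :: "complex \<Rightarrow> 'g::ab_group_add \<Rightarrow> 'g"
    and br :: "'g \<Rightarrow> 'g \<Rightarrow> 'g"
    and Bf :: "'g \<Rightarrow> 'g \<Rightarrow> complex"
    and H :: "'g set"
    and \<alpha>0 :: "'g \<Rightarrow> complex"
    and c :: complex
  assumes "gen_reductive smul br Bf H"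
    and "\<alpha>0 \<in> roots_x smul br Bf H"
    and "c \<noteq> 0"
    and "\<forall>u\<in>rspan (component smul br Bf H \<alpha>0). \<forall>w\<in>rspan (component smul br Bf H \<alpha>0).
           c * dform Bf H u w \<in> \<real>"
    and "\<forall>\<alpha>\<in>component smul br Bf H \<alpha>0. Re (c * dform Bf H \<alpha> \<alpha>) > 0"
  shows "(\<forall>v\<in>rspan (component smul br Bf H \<alpha>0).
            v \<notin> radical smul br Bf H \<longrightarrow> Re (c * dform Bf H v v) > 0)
       \<and> (\<forall>v\<in>rspan (component smul br Bf H \<alpha>0). Re (c * dform Bf H v v) \<ge> 0)"
proof -
  interpret GR smul br Bf H by unfold_locales (rule assms(1))
  define R where "R = roots smul br H"
  define S where "S = component smul br Bf H \<alpha>0"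
  define B where "B x y = Re (c * dform Bf H x y)" for x y
  define rel where "rel = (\<lambda>\<alpha> \<gamma>. \<alpha> \<in> roots_x smul br Bf H \<and> \<gamma> \<in> roots_x smul br Bf H \<and> dform Bf H \<alpha> \<gamma> \<noteq> 0)"
  have S_iff: "x \<in> S \<longleftrightarrow> rel\<^sup>*\<^sup>* \<alpha>0 x" for x unfolding S_def component_def rel_def by simp
  have comp_rx: "\<beta> \<in> roots_x smul br Bf H" if "\<beta> \<in> S" for \<beta>
  proof -
    have "rel\<^sup>*\<^sup>* \<alpha>0 \<beta>" using that S_iff by blast
    then show ?thesis
      by (induction rule: rtranclp_induct) (use assms(2) rel_def in auto)
  qed
  have comp_step: "\<gamma> \<in> S" if "\<beta> \<in> S" "\<gamma> \<in> roots_x smul br Bf H" "dform Bf H \<beta> \<gamma> \<noteq> 0" for \<beta> \<gamma>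
  proof -
    have "rel \<beta> \<gamma>" unfolding rel_def using that comp_rx by blast
    then show ?thesis using that(1) S_iff rtranclp.rtrancl_into_rtrancl by metis
  qed
  have a0S: "\<alpha>0 \<in> S" using S_iff by simp
  have SR: "S \<subseteq> R" unfolding R_def using comp_rx unfolding roots_x_def by blast
  have SH: "S \<subseteq> Hdual smul H" using SR roots_Hdual unfolding R_def by blast
  obtain A where A: "finite A" "A \<subseteq> S" "S \<subseteq> FS.span A" using findim[OF SH] by blast
  have spanTV: "x \<in> TV" if "x \<in> FS.span R" for x using that span_roots_TV unfolding R_def by blast
  have ev2: "dform Bf H x y = x (tvec Bf H y)" if "x \<in> FS.span R" "y \<in> FS.span R" for x y
    using dform_eval2 spanTV that by blast
  have rootTV: "x \<in> TV" if "x \<in> R" for x using root_TV that unfolding R_def by blast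
  have in_rspan: "x \<in> rspan S" if "x \<in> S" for x using that rspan_eq FS.span_base by blast
  have real_S: "c * dform Bf H x y \<in> \<real>" if "x \<in> S" "y \<in> S" for x y
    using assms(4) in_rspan that unfolding S_def by blast
  interpret C: comb rsc B R S A \<alpha>0
  proof unfold_locales
    show "S \<subseteq> R" by (rule SR)
  next
    fix x y z assume x: "x \<in> FS.span R" and y: "y \<in> FS.span R" and z: "z \<in> FS.span R"
    have xy: "x + y \<in> FS.span R" using x y FS.span_add by blast
    show "B (x + y) z = B x z + B y z"
      unfolding B_def using ev2[OF xy z] ev2[OF x z] ev2[OF y z] by (simp add: distrib_left)
  next
    fix r x z assume x: "x \<in> FS.span R" and z: "z \<in> FS.span R"
    have rx: "rsc r x \<in> FS.span R" using x FS.span_scale by blast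
    show "B (rsc r x) z = r * B x z"
      unfolding B_def using ev2[OF rx z] ev2[OF x z] by (simp add: mult.left_commute right_diff_distrib)
  next
    fix x y show "B x y = B y x" unfolding B_def by (simp add: dform_sym)
  next
    fix x assume "x \<in> S" then show "0 < B x x" unfolding B_def using assms(5) S_def by blast
  next
    fix x assume xS: "x \<in> S"
    have xr: "x \<in> roots_x smul br Bf H" using comp_rx[OF xS] .
    have nxr: "- x \<in> roots_x smul br Bf H" using neg_rx[OF xr] .
    have xT: "x \<in> TV" and nxT: "- x \<in> TV" using xr nxr root_TV unfolding roots_x_def by auto
    have "dform Bf H x (- x) = - dform Bf H x x" using dform_eval[OF xT nxT] dform_eval[OF xT xT] by simp
    moreover have "dform Bf H x x \<noteq> 0" using xr unfolding roots_x_def by blast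
    ultimately have "dform Bf H x (- x) \<noteq> 0" by simp
    then show "- x \<in> S" using comp_step[OF xS nxr] by blast
  next
    fix x y assume xS: "x \<in> S" and yR: "y \<in> R" and Bxy: "B x y \<noteq> 0"
    have d: "dform Bf H x y \<noteq> 0" using Bxy unfolding B_def by auto
    show "y \<in> S \<or> B y y = 0"
    proof (cases "dform Bf H y y = 0")
      case True then show ?thesis unfolding B_def by simp
    next
      case False
      hence "y \<in> roots_x smul br Bf H" using yR unfolding roots_x_def R_def by blast
      then show ?thesis using comp_step[OF xS _ d] by blast
    qed
  next
    fix x y assume xS: "x \<in> S" and yR: "y \<in> R"
    obtain n where n: "2 * dform Bf H y x = of_int n * dform Bf H x x"
      and str: "\<forall>k::int. (0 \<le> k \<and> k \<le> n \<or> n \<le> k \<and> k \<le> 0) \<longrightarrow> (\<lambda>z. y z - of_int k * x z) \<in> roots smul br H"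
      using root_string[OF comp_rx[OF xS], of y] yR unfolding R_def by blast
    have "2 * B y x = Re (c * (2 * dform Bf H y x))" unfolding B_def by simp
    also have "\<dots> = of_int n * B x x" unfolding n B_def
      by (simp add: mult.left_commute[of c])
    finally have e: "2 * B y x = of_int n * B x x" .
    have "\<forall>k::int. (0 \<le> k \<and> k \<le> n \<or> n \<le> k \<and> k \<le> 0) \<longrightarrow> y - rsc (of_int k) x \<in> R"
    proof (intro allI impI)
      fix k :: int assume k: "0 \<le> k \<and> k \<le> n \<or> n \<le> k \<and> k \<le> 0"
      have "y - rsc (of_int k) x = (\<lambda>z. y z - of_int k * x z)" by (auto simp: fun_eq_iff)
      moreover have "(\<lambda>z. y z - of_int k * x z) \<in> roots smul br H" by (rule str[rule_format, OF k])
      ultimately show "y - rsc (of_int k) x \<in> R" unfolding R_def by simp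
    qed
    then show "\<exists>n::int. 2 * B y x = of_int n * B x x \<and>
            (\<forall>k::int. (0 \<le> k \<and> k \<le> n \<or> n \<le> k \<and> k \<le> 0) \<longrightarrow> y - rsc (of_int k) x \<in> R)"
      using e by blast
  next
    show "finite A" by (rule A(1))
  next
    show "A \<subseteq> S" by (rule A(2))
  next
    show "S \<subseteq> FS.span A" by (rule A(3))
  next
    show "\<alpha>0 \<in> S" by (rule a0S)
  next
    fix y assume yS: "y \<in> S"
    have "rel\<^sup>*\<^sup>* \<alpha>0 y" using yS S_iff by blast
    then show "(\<lambda>x y. x \<in> S \<and> y \<in> S \<and> B x y \<noteq> 0)\<^sup>*\<^sup>* \<alpha>0 y"
    proof (induction rule: rtranclp_induct)
      case base then show ?case by simp
    next
      case (step y z)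
      have yS': "y \<in> S" using step(1) S_iff by blast
      have zS': "z \<in> S" using step(1,2) S_iff rtranclp.rtrancl_into_rtrancl by metis
      have "dform Bf H y z \<noteq> 0" using step(2) unfolding rel_def by blast
      hence "c * dform Bf H y z \<noteq> 0" using assms(3) by simp
      hence "B y z \<noteq> 0" unfolding B_def using real_nz_Re real_S[OF yS' zS'] by blast
      then show ?case using step(3) yS' zS' rtranclp.rtrancl_into_rtrancl[of _ \<alpha>0 y z] by blast
    qed
  qed
  have res: "0 \<le> B v v \<and> (B v v = 0 \<longrightarrow> (\<forall>\<gamma>\<in>R. B \<gamma> v = 0))" if "v \<in> FS.span S" for v
    using C.comb_result[OF that] .
  have spanSR: "FS.span S \<subseteq> FS.span R" using FS.span_mono[OF SR] .
  have part2: "\<forall>v\<in>rspan S. Re (c * dform Bf H v v) \<ge> 0"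
  proof
    fix v assume "v \<in> rspan S"
    hence "v \<in> FS.span S" by (simp add: rspan_eq)
    then show "Re (c * dform Bf H v v) \<ge> 0" using res unfolding B_def by blast
  qed
  have part1: "\<forall>v\<in>rspan S. v \<notin> radical smul br Bf H \<longrightarrow> Re (c * dform Bf H v v) > 0"
  proof (intro ballI impI)
    fix v assume vr: "v \<in> rspan S" and nrad: "v \<notin> radical smul br Bf H"
    have vS: "v \<in> FS.span S" using vr by (simp add: rspan_eq)
    have vR: "v \<in> FS.span R" using spanSR vS by (rule subsetD)
    have vT: "v \<in> TV" using spanTV[OF vR] .
    show "Re (c * dform Bf H v v) > 0"
    proof (rule ccontr)
      assume "\<not> Re (c * dform Bf H v v) > 0"
      hence "B v v = 0" using res[OF vS] unfolding B_def by linarith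
      hence zero: "\<forall>\<gamma>\<in>R. B \<gamma> v = 0" using res[OF vS] by blast
      have realv: "c * dform Bf H \<gamma> v \<in> \<real>" if gR: "\<gamma> \<in> R" for \<gamma>
      proof -
        have gT: "\<gamma> \<in> TV" using rootTV[OF gR] .
        have "c * v (tvec Bf H \<gamma>) \<in> \<real>" using vS
        proof (induction rule: FS.span_induct_alt)
          case base then show ?case by simp
        next
          case (step r \<beta> u)
          have bS: "\<beta> \<in> S" using step(1) .
          have bT: "\<beta> \<in> TV" using rootTV SR bS by blast
          obtain n where n: "2 * dform Bf H \<gamma> \<beta> = of_int n * dform Bf H \<beta> \<beta>"
            using root_string[OF comp_rx[OF bS], of \<gamma>] gR unfolding R_def by blast
          have "dform Bf H \<gamma> \<beta> = (of_int n / 2) * dform Bf H \<beta> \<beta>"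
            using n by (simp add: field_simps)
          hence "c * dform Bf H \<gamma> \<beta> = (of_int n / 2) * (c * dform Bf H \<beta> \<beta>)" by simp
          moreover have "(of_int n / 2 :: complex) \<in> \<real>" by (simp add: Reals_divide)
          ultimately have "c * dform Bf H \<gamma> \<beta> \<in> \<real>" using real_S[OF bS bS] Reals_mult by metis
          hence "c * \<beta> (tvec Bf H \<gamma>) \<in> \<real>" using dform_eval[OF gT bT] by simp
          hence "complex_of_real r * (c * \<beta> (tvec Bf H \<gamma>)) + c * u (tvec Bf H \<gamma>) \<in> \<real>"
            using step(2) by (simp add: Reals_add Reals_mult)
          then show ?case by (simp add: algebra_simps)
        qed
        then show ?thesis using dform_eval[OF gT vT] by simp
      qed
      have dz: "dform Bf H \<gamma> v = 0" if gR: "\<gamma> \<in> R" for \<gamma>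
      proof -
        have "Re (c * dform Bf H \<gamma> v) = 0" using zero gR unfolding B_def by blast
        hence "c * dform Bf H \<gamma> v = 0" using real_nz_Re[OF realv[OF gR]] by blast
        then show ?thesis using assms(3) by simp
      qed
      have "v \<in> radical smul br Bf H"
        unfolding radical_def
      proof (intro CollectI conjI ballI)
        show "v \<in> rspan (roots smul br H)" using vR rspan_eq unfolding R_def by blast
      next
        fix w assume "w \<in> rspan (roots smul br H)"
        hence wR: "w \<in> FS.span R" using rspan_eq unfolding R_def by blast
        have wT: "w \<in> TV" using spanTV[OF wR] .
        have "w (tvec Bf H v) = 0" using wR
        proof (induction rule: FS.span_induct_alt)
          case base then show ?case by simp
        next
          case (step r \<gamma> u)
          have gT: "\<gamma> \<in> TV" using rootTV[OF step(1)] .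
          have "\<gamma> (tvec Bf H v) = dform Bf H v \<gamma>" using dform_eval[OF vT gT] by simp
          also have "\<dots> = 0" using dz[OF step(1)] dform_sym by metis
          finally show ?case using step(2) by simp
        qed
        then show "dform Bf H v w = 0" using dform_eval[OF vT wT] by simp
      qed
      then show False using nrad by blast
    qed
  qed
  show ?thesis using part1 part2 unfolding S_def by blast
qed


end
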